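(* Setting: $\mathcal{G}$ is a connected undirected graph with nodes $\mathcal{V}=\{1,\dots,n\}$, edges $\{1,\dots,m\}$ and incidence matrix $B$; $p\ge1$, $E=\begin{bmatrix} I_{p}\\ \mathbf{0}_{(n-p)\times p}\end{bmatrix}$, $\mathcal{V}_e=\{1,\dots,p\}$ is a zero forcing set for $\mathcal{G}$. $T_x,T_\mu,T_\theta,T_\phi$ are diagonal with strictly positive diagonal entries; $d\in\mathbb{R}^n$ constant; $h(x)=(h_1(x_1),\dots,h_n(x_n))^T$ with $h_i$ continuously differentiable and strictly increasing; $\overline y\in\mathbb{R}^n$ with $\overline y_i\in\mathcal{R}(h_i)$, and $\overline x$ is the vector with $h(\overline x)=\overline y$. $Q=\operatorname{diag}(q_1,\dots,q_p)$, $q_i>0$, $r\in\mathbb{R}^p$; $L^{com}$ is the Laplacian of a balanced, strongly connected weighted directed graph on $\{1,\dots,p\}$. $B_c\in\mathbb{R}^{n\times l}$ is the incidence matrix of a (not necessarily connected) graph on $\mathcal{V}$; $\mathcal{V}_c=\{c_1,\dots,c_{p_c}\}$ is a set of distinct nodes and $E_c\in\mathbb{R}^{n\times p_c}$ has $k$-th column the $c_k$-th standard unit vector; $\gamma(a)=(\gamma_1(a_1),\dots,\gamma_l(a_l))^T$, $\eta(b)=(\eta_{c_1}(b_1),\dots,\eta_{c_{p_c}}(b_{p_c}))^T$ with all $\gamma_k,\eta_{c_j}$ continuously differentiable and nondecreasing; $\Psi(x)=-B_c\gamma(B_c^Th(x))-E_c\eta(E_c^Th(x))$. Let $\hat u=Q^{-1}(\hat\kappa-r)$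 with $\hat\kappa=E^T\frac{\mathbb{1}_n\mathbb{1}_n^T}{\mathbb{1}_p^TQ^{-1}\mathbb{1}_p}(\hat d+EQ^{-1}r)$ and $\hat d=d+E_c\eta(E_c^Th(\overline x))$. The maps $f(\mu)=(f_1(\mu_1),\dots,f_m(\mu_m))^T$, $g(\theta)=(g_1(\theta_1),\dots,g_p(\theta_p))^T$ have continuously differentiable strictly increasing components with $\mathcal{R}(f_k)=(\lambda_k^-,\lambda_k^+)$, $\mathcal{R}(g_i)=(u_i^-,u_i^+)$; there exists $\omega\in\mathbb{R}^m$ with $[B^\dagger(\Psi(\overline x)+E\hat u-d)+(I-B^\dagger B)\omega]_k\in\mathcal{R}(f_k)$ for all $k$, and $\hat u_i\in\mathcal{R}(g_i)$ for all $i$. Let $\mathcal{V}_s=\{c_j\in\mathcal{V}_c:\ \eta_{c_j}'(h_{c_j}(\overline x_{c_j}))>0\}$ and suppose $\mathcal{V}_e\cup\mathcal{V}_s$ is a zero forcing set for $\mathcal{G}$. Consider $T_x\dot x=\Psi(x)-B\lambda+Eu-d$, $y=h(x)$, in closed loop with $T_\mu\dot\mu=B^T(h(x)-\overline y)$, $\lambda=f(\mu)$, and $T_\theta\dot\theta=-E^T(h(x)-\overline y)-(g(\theta)-\phi)$, $T_\phi\dot\phi=g(\theta)-\phi-QL^{com}(Q\phi+r)$, $u=g(\theta)$. Let $(\overline x,\overline\mu,\overline\theta,\overline\phi)$ be an equilibrium of this closed-loop system and $$\Upsilon_4=\{(x,\mu,\theta,\phi):\ B(f(\mu)-f(\overline\mu))=\mathbf{0},\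 x=\overline x,\ \theta=\overline\theta,\ \phi=\overline\phi\}.$$ Then, for every initial condition, the solution converges to a point in $\Upsilon_4$, at which $\lambda=f(\mu)$ is constant, $h(x)=\overline y$ and $u=g(\theta)=\hat u$.
   Context: Zero forcing set: color the nodes of a given set $\mathcal{V}_0\subseteq\mathcal{V}$ black and the others white, and repeatedly apply the rule "if a black node has exactly one white neighbor in $\mathcal{G}$, that neighbor becomes black" until no change is possible; $\mathcal{V}_0$ is a zero forcing set if all nodes end up black. $\mathcal{R}(\cdot)$ denotes range; $B^\dagger$ the Moore–Penrose pseudoinverse; $\mathbb{1}_k$ the all-ones vector. Incidence matrices are obtained by arbitrarily orienting edges ($+1$ at the positive end, $-1$ at the negative end, $0$ otherwise). Bounds $\lambda_k^-<\lambda_k^+$, $u_i^-<u_i^+$ are given constants (infinite values allowed). A weighted directed graph is balanced if at every node weighted in-degree equals weighted out-degree; $L^{com}=D-A$ with $A$ the weighted adjacency matrix and $D$ the diagonal out-degree matrix. $\hat u$ is the minimizer of $\frac12u^TQu+r^Tu$ subject to $\mathbf{0}=\Psi(\overline x)-B\lambda+Eu-d$. *)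

theory Defs
  imports "HOL-Analysis.Analysis"
begin

text \<open>Conventions: nodes, edges and all vector/matrix indices are 0-based.
Vectors are functions nat => real (only indices below the stated size matter),
matrices are functions nat => nat => real.\<close>

definition mv :: "(nat \<Rightarrow> nat \<Rightarrow> real) \<Rightarrow> nat \<Rightarrow> (nat \<Rightarrow> real) \<Rightarrow> nat \<Rightarrow> real" where
  "mv A k v = (\<lambda>i. \<Sum>j<k. A i j * v j)"

definition mm :: "(nat \<Rightarrow> nat \<Rightarrow> real) \<Rightarrow> nat \<Rightarrow> (nat \<Rightarrow> nat \<Rightarrow> real) \<Rightarrow> nat \<Rightarrow> nat \<Rightarrow> real" where
  "mm A k C = (\<lambda>i j. \<Sum>l<k. A i l * C l j)"

definition tr :: "(nat \<Rightarrow> nat \<Rightarrow> real) \<Rightarrow> nat \<Rightarrow> nat \<Rightarrow> real" where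
  "tr A = (\<lambda>i j. A j i)"

text \<open>Moore--Penrose pseudoinverse of an n x m matrix B (an m x n matrix),
characterised by the four Penrose conditions (entries outside m x n are 0).\<close>
definition is_pinv :: "nat \<Rightarrow> nat \<Rightarrow> (nat \<Rightarrow> nat \<Rightarrow> real) \<Rightarrow> (nat \<Rightarrow> nat \<Rightarrow> real) \<Rightarrow> bool" where
  "is_pinv n m B X \<longleftrightarrow>
     (\<forall>i j. (m \<le> i \<or> n \<le> j) \<longrightarrow> X i j = 0) \<and>
     (\<forall>i<n. \<forall>j<m. mm (mm B m X) n B i j = B i j) \<and>
     (\<forall>i<m. \<forall>j<n. mm (mm X n B) m X i j = X i j) \<and>
     (\<forall>i<n. \<forall>j<n. mm B m X i j = mm B m X j i) \<and>
     (\<forall>i<m. \<forall>j<m. mm X n B i j = mm X n B j i)"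

definition pinv :: "nat \<Rightarrow> nat \<Rightarrow> (nat \<Rightarrow> nat \<Rightarrow> real) \<Rightarrow> nat \<Rightarrow> nat \<Rightarrow> real" where
  "pinv n m B = (THE X. is_pinv n m B X)"

text \<open>Undirected simple graph on nodes {0..<n} with m edges; edge k has
endpoints fst (e k) (positive end) and snd (e k) (negative end).\<close>
definition simple_graph :: "nat \<Rightarrow> nat \<Rightarrow> (nat \<Rightarrow> nat \<times> nat) \<Rightarrow> bool" where
  "simple_graph n m e \<longleftrightarrow>
     (\<forall>k<m. fst (e k) < n \<and> snd (e k) < n \<and> fst (e k) \<noteq> snd (e k)) \<and>
     (\<forall>k<m. \<forall>k'<m. k \<noteq> k' \<longrightarrow> {fst (e k), snd (e k)} \<noteq> {fst (e k'), snd (e k')})"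

definition incidence :: "nat \<Rightarrow> (nat \<Rightarrow> nat \<times> nat) \<Rightarrow> nat \<Rightarrow> nat \<Rightarrow> real" where
  "incidence m e = (\<lambda>i k. if k < m \<and> i = fst (e k) then 1
                         else if k < m \<and> i = snd (e k) then -1 else 0)"

definition adj :: "nat \<Rightarrow> (nat \<Rightarrow> nat \<times> nat) \<Rightarrow> nat \<Rightarrow> nat \<Rightarrow> bool" where
  "adj m e u v \<longleftrightarrow> (\<exists>k<m. {u, v} = {fst (e k), snd (e k)})"

definition graph_connected :: "nat \<Rightarrow> nat \<Rightarrow> (nat \<Rightarrow> nat \<times> nat) \<Rightarrow> bool" where
  "graph_connected n m e \<longleftrightarrow> (\<forall>u<n. \<forall>v<n. (adj m e)\<^sup>*\<^sup>* u v)"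

inductive zf_black :: "nat \<Rightarrow> nat \<Rightarrow> (nat \<Rightarrow> nat \<times> nat) \<Rightarrow> nat set \<Rightarrow> nat \<Rightarrow> bool"
  for n m e V0 where
  init: "v \<in> V0 \<Longrightarrow> v < n \<Longrightarrow> zf_black n m e V0 v"
| force: "zf_black n m e V0 u \<Longrightarrow> adj m e u v \<Longrightarrow>
          (\<forall>w. adj m e u w \<and> w \<noteq> v \<longrightarrow> zf_black n m e V0 w) \<Longrightarrow> zf_black n m e V0 v"

definition zero_forcing_set :: "nat \<Rightarrow> nat \<Rightarrow> (nat \<Rightarrow> nat \<times> nat) \<Rightarrow> nat set \<Rightarrow> bool" where
  "zero_forcing_set n m e V0 \<longleftrightarrow> V0 \<subseteq> {..<n} \<and> (\<forall>v<n. zf_black n m e V0 v)"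

text \<open>Weighted directed graph on {0..<p}: a i j \<ge> 0 is the weight of edge (i,j).\<close>
definition weighted_digraph :: "nat \<Rightarrow> (nat \<Rightarrow> nat \<Rightarrow> real) \<Rightarrow> bool" where
  "weighted_digraph p a \<longleftrightarrow> (\<forall>i<p. \<forall>j<p. a i j \<ge> 0) \<and> (\<forall>i<p. a i i = 0)"

definition balanced :: "nat \<Rightarrow> (nat \<Rightarrow> nat \<Rightarrow> real) \<Rightarrow> bool" where
  "balanced p a \<longleftrightarrow> (\<forall>i<p. (\<Sum>j<p. a j i) = (\<Sum>j<p. a i j))"

definition strongly_connected :: "nat \<Rightarrow> (nat \<Rightarrow> nat \<Rightarrow> real) \<Rightarrow> bool" where
  "strongly_connected p a \<longleftrightarrow>
     (\<forall>i<p. \<forall>j<p. (\<lambda>u v. u < p \<and> v < p \<and> a u v > 0)\<^sup>*\<^sup>* i j)"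

definition laplacian :: "nat \<Rightarrow> (nat \<Rightarrow> nat \<Rightarrow> real) \<Rightarrow> nat \<Rightarrow> nat \<Rightarrow> real" where
  "laplacian p a = (\<lambda>i j. (if i = j then (\<Sum>k<p. a i k) else 0) - a i j)"

definition C1 :: "(real \<Rightarrow> real) \<Rightarrow> bool" where
  "C1 f \<longleftrightarrow> (\<forall>x. f differentiable (at x)) \<and> continuous_on UNIV (deriv f)"

end

theory Submission
  imports Defs
begin

definition ucont :: "(real \<Rightarrow> real) \<Rightarrow> bool" where
  "ucont u \<longleftrightarrow> (\<forall>\<epsilon>>0. \<exists>\<delta>>0. \<forall>t\<ge>0. \<forall>s\<ge>0. \<bar>t - s\<bar> < \<delta> \<longrightarrow> \<bar>u t - u s\<bar> < \<epsilon>)"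
definition bnd :: "(real \<Rightarrow> real) \<Rightarrow> bool" where
  "bnd u \<longleftrightarrow> (\<exists>M. \<forall>t\<ge>0. \<bar>u t\<bar> \<le> M)"
definition nice :: "(real \<Rightarrow> real) \<Rightarrow> bool" where
  "nice u \<longleftrightarrow> bnd u \<and> ucont u"
definition sv :: "(real \<Rightarrow> real) \<Rightarrow> bool" where
  "sv u \<longleftrightarrow> (\<forall>\<epsilon>>0. \<exists>T. \<forall>t\<ge>T. \<forall>\<tau>. 0 \<le> \<tau> \<and> \<tau> \<le> 1 \<longrightarrow> \<bar>u (t+\<tau>) - u t\<bar> < \<epsilon>)"

lemma bnd_const: "bnd (\<lambda>t. c)" unfolding bnd_def by auto

lemma bnd_add: "bnd u \<Longrightarrow> bnd v \<Longrightarrow> bnd (\<lambda>t. u t + v t)"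
  unfolding bnd_def
proof clarify
  fix M N assume a: "\<forall>t\<ge>0. \<bar>u t\<bar> \<le> M" "\<forall>t\<ge>0. \<bar>v t\<bar> \<le> N"
  have "\<forall>t\<ge>0. \<bar>u t + v t\<bar> \<le> M + N"
  proof (intro allI impI)
    fix t :: real assume "t \<ge> 0"
    then have "\<bar>u t\<bar> \<le> M" "\<bar>v t\<bar> \<le> N" using a by auto
    then show "\<bar>u t + v t\<bar> \<le> M + N" using abs_triangle_ineq[of "u t" "v t"] by linarith
  qed
  then show "\<exists>M. \<forall>t\<ge>0. \<bar>u t + v t\<bar> \<le> M" by blast
qed

lemma bnd_mult: "bnd u \<Longrightarrow> bnd v \<Longrightarrow> bnd (\<lambda>t. u t * v t)"
  unfolding bnd_def
proof clarify
  fix M N assume a: "\<forall>t\<ge>0. \<bar>u t\<bar> \<le> M" "\<forall>t\<ge>0. \<bar>v t\<bar> \<le> N"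
  have "\<forall>t\<ge>0. \<bar>u t * v t\<bar> \<le> M * N"
  proof clarify
    fix t :: real assume "t \<ge> 0"
    then have "\<bar>u t\<bar> \<le> M" "\<bar>v t\<bar> \<le> N" using a by auto
    then show "\<bar>u t * v t\<bar> \<le> M * N" by (simp add: abs_mult mult_mono')
  qed
  then show "\<exists>M. \<forall>t\<ge>0. \<bar>u t * v t\<bar> \<le> M" by blast
qed

lemma bnd_bound: "bnd u \<Longrightarrow> \<exists>M>0. \<forall>t\<ge>0. \<bar>u t\<bar> \<le> M"
proof -
  assume "bnd u"
  then obtain M where M: "\<forall>t\<ge>0. \<bar>u t\<bar> \<le> M" unfolding bnd_def by blast
  have "\<forall>t\<ge>0. \<bar>u t\<bar> \<le> max M 1" using M by (auto intro: max.coboundedI1 order_trans)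
  moreover have "max M 1 > 0" by simp
  ultimately show ?thesis by blast
qed

lemma ucont_const: "ucont (\<lambda>t. c)" unfolding ucont_def by auto

lemma ucont_add: "ucont u \<Longrightarrow> ucont v \<Longrightarrow> ucont (\<lambda>t. u t + v t)"
  unfolding ucont_def
proof (intro allI impI)
  fix \<epsilon> :: real assume e: "\<epsilon> > 0" and
    u: "\<forall>\<epsilon>>0. \<exists>\<delta>>0. \<forall>t\<ge>0. \<forall>s\<ge>0. \<bar>t - s\<bar> < \<delta> \<longrightarrow> \<bar>u t - u s\<bar> < \<epsilon>" and
    v: "\<forall>\<epsilon>>0. \<exists>\<delta>>0. \<forall>t\<ge>0. \<forall>s\<ge>0. \<bar>t - s\<bar> < \<delta> \<longrightarrow> \<bar>v t - v s\<bar> < \<epsilon>"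
  have e2: "\<epsilon>/2 > 0" using e by simp
  obtain d1 where d1: "d1 > 0" "\<forall>t\<ge>0. \<forall>s\<ge>0. \<bar>t - s\<bar> < d1 \<longrightarrow> \<bar>u t - u s\<bar> < \<epsilon>/2"
    using u[rule_format, OF e2] by blast
  obtain d2 where d2: "d2 > 0" "\<forall>t\<ge>0. \<forall>s\<ge>0. \<bar>t - s\<bar> < d2 \<longrightarrow> \<bar>v t - v s\<bar> < \<epsilon>/2"
    using v[rule_format, OF e2] by blast
  show "\<exists>\<delta>>0. \<forall>t\<ge>0. \<forall>s\<ge>0. \<bar>t - s\<bar> < \<delta> \<longrightarrow> \<bar>u t + v t - (u s + v s)\<bar> < \<epsilon>"
  proof (intro exI[of _ "min d1 d2"] conjI allI impI)
    show "min d1 d2 > 0" using d1 d2 by simp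
    fix t s :: real assume "t \<ge> 0" "s \<ge> 0" "\<bar>t - s\<bar> < min d1 d2"
    then have "\<bar>u t - u s\<bar> < \<epsilon>/2" "\<bar>v t - v s\<bar> < \<epsilon>/2" using d1 d2 by auto
    then show "\<bar>u t + v t - (u s + v s)\<bar> < \<epsilon>" by linarith
  qed
qed

lemma ucont_mult: "nice u \<Longrightarrow> nice v \<Longrightarrow> ucont (\<lambda>t. u t * v t)"
proof -
  assume nu: "nice u" and nv: "nice v"
  obtain M where M: "M > 0" "\<forall>t\<ge>0. \<bar>u t\<bar> \<le> M" using nu bnd_bound nice_def by blast
  obtain N where N: "N > 0" "\<forall>t\<ge>0. \<bar>v t\<bar> \<le> N" using nv bnd_bound nice_def by blast
  have u: "\<forall>\<epsilon>>0. \<exists>\<delta>>0. \<forall>t\<ge>0. \<forall>s\<ge>0. \<bar>t - s\<bar> < \<delta> \<longrightarrow> \<bar>u t - u s\<bar> < \<epsilon>"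
    using nu by (simp add: nice_def ucont_def)
  have v: "\<forall>\<epsilon>>0. \<exists>\<delta>>0. \<forall>t\<ge>0. \<forall>s\<ge>0. \<bar>t - s\<bar> < \<delta> \<longrightarrow> \<bar>v t - v s\<bar> < \<epsilon>"
    using nv by (simp add: nice_def ucont_def)
  show ?thesis unfolding ucont_def
  proof (intro allI impI)
    fix \<epsilon> :: real assume e: "\<epsilon> > 0"
    have e1: "\<epsilon>/(2*N) > 0" and e2: "\<epsilon>/(2*M) > 0" using e M N by auto
    obtain d1 where d1: "d1 > 0" "\<forall>t\<ge>0. \<forall>s\<ge>0. \<bar>t - s\<bar> < d1 \<longrightarrow> \<bar>u t - u s\<bar> < \<epsilon>/(2*N)"
      using u[rule_format, OF e1] by blast
    obtain d2 where d2: "d2 > 0" "\<forall>t\<ge>0. \<forall>s\<ge>0. \<bar>t - s\<bar> < d2 \<longrightarrow> \<bar>v t - v s\<bar> < \<epsilon>/(2*M)"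
      using v[rule_format, OF e2] by blast
    show "\<exists>\<delta>>0. \<forall>t\<ge>0. \<forall>s\<ge>0. \<bar>t - s\<bar> < \<delta> \<longrightarrow> \<bar>u t * v t - u s * v s\<bar> < \<epsilon>"
    proof (intro exI[of _ "min d1 d2"] conjI allI impI)
      show "min d1 d2 > 0" using d1 d2 by simp
      fix t s :: real assume ts: "t \<ge> 0" "s \<ge> 0" "\<bar>t - s\<bar> < min d1 d2"
      then have a: "\<bar>u t - u s\<bar> < \<epsilon>/(2*N)" "\<bar>v t - v s\<bar> < \<epsilon>/(2*M)" using d1 d2 by auto
      have "u t * v t - u s * v s = u t * (v t - v s) + v s * (u t - u s)" by (simp add: algebra_simps)
      also have "\<bar>\<dots>\<bar> \<le> \<bar>u t\<bar> * \<bar>v t - v s\<bar> + \<bar>v s\<bar> * \<bar>u t - u s\<bar>"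
        by (metis abs_mult abs_triangle_ineq)
      also have "\<dots> \<le> M * \<bar>v t - v s\<bar> + N * \<bar>u t - u s\<bar>"
        using M N ts by (intro add_mono mult_right_mono) auto
      also have "\<dots> < M * (\<epsilon>/(2*M)) + N * (\<epsilon>/(2*N))"
        using a M N by (intro add_strict_mono mult_strict_left_mono) auto
      also have "\<dots> = \<epsilon>" using M N by simp
      finally show "\<bar>u t * v t - u s * v s\<bar> < \<epsilon>" .
    qed
  qed
qed

lemma nice_const: "nice (\<lambda>t. c)" by (simp add: nice_def bnd_const ucont_const)
lemma nice_add: "nice u \<Longrightarrow> nice v \<Longrightarrow> nice (\<lambda>t. u t + v t)"
  by (simp add: nice_def bnd_add ucont_add)
lemma nice_mult: "nice u \<Longrightarrow> nice v \<Longrightarrow> nice (\<lambda>t. u t * v t)"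
  by (simp add: nice_def bnd_mult ucont_mult)
lemma nice_uminus: "nice u \<Longrightarrow> nice (\<lambda>t. - u t)"
  using nice_mult[OF nice_const[of "-1"], of u] by simp
lemma nice_diff: "nice u \<Longrightarrow> nice v \<Longrightarrow> nice (\<lambda>t. u t - v t)"
  using nice_add[OF _ nice_uminus, of u v] by simp
lemma nice_divc: "nice u \<Longrightarrow> nice (\<lambda>t. u t / c)"
  using nice_mult[OF _ nice_const[of "1/c"], of u] by simp
lemma nice_cmult: "nice u \<Longrightarrow> nice (\<lambda>t. c * u t)"
  using nice_mult[OF nice_const[of c], of u] by simp
lemma nice_sum: "finite A \<Longrightarrow> (\<And>i. i \<in> A \<Longrightarrow> nice (f i)) \<Longrightarrow> nice (\<lambda>t. \<Sum>i\<in>A. f i t)"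
  by (induction A rule: finite_induct) (auto simp: nice_const intro!: nice_add)

lemma nice_comp:
  assumes cont: "continuous_on UNIV \<phi>" and nu: "nice u"
  shows "nice (\<lambda>t. \<phi> (u t))"
proof -
  obtain M where M: "M > 0" "\<forall>t\<ge>0. \<bar>u t\<bar> \<le> M" using nu bnd_bound nice_def by blast
  have uc: "uniformly_continuous_on {-M..M} \<phi>"
    by (rule compact_uniformly_continuous) (auto intro: continuous_on_subset[OF cont])
  have "compact (\<phi> ` {-M..M})"
    by (intro compact_continuous_image continuous_on_subset[OF cont]) auto
  then have "bounded (\<phi> ` {-M..M})" by (rule compact_imp_bounded)
  then obtain K where "\<forall>z\<in>\<phi> ` {-M..M}. \<bar>z\<bar> \<le> K" unfolding bounded_real by blast
  then have K: "\<forall>y\<in>{-M..M}. \<bar>\<phi> y\<bar> \<le> K" by blast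
  have "\<forall>t\<ge>0. \<bar>\<phi> (u t)\<bar> \<le> K"
  proof (intro allI impI)
    fix t :: real assume "t \<ge> 0"
    then have "u t \<in> {-M..M}" using M by (auto simp: abs_le_iff)
    then show "\<bar>\<phi> (u t)\<bar> \<le> K" using K by blast
  qed
  then have b: "bnd (\<lambda>t. \<phi> (u t))" unfolding bnd_def by blast
  have u: "\<forall>\<epsilon>>0. \<exists>\<delta>>0. \<forall>t\<ge>0. \<forall>s\<ge>0. \<bar>t - s\<bar> < \<delta> \<longrightarrow> \<bar>u t - u s\<bar> < \<epsilon>"
    using nu by (simp add: nice_def ucont_def)
  have "ucont (\<lambda>t. \<phi> (u t))" unfolding ucont_def
  proof (intro allI impI)
    fix \<epsilon> :: real assume e: "\<epsilon> > 0"
    obtain d where d: "d > 0" "\<forall>x\<in>{-M..M}. \<forall>x'\<in>{-M..M}. dist x' x < d \<longrightarrow> dist (\<phi> x') (\<phi> x) < \<epsilon>"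
      using uc e unfolding uniformly_continuous_on_def by blast
    obtain d' where d': "d' > 0" "\<forall>t\<ge>0. \<forall>s\<ge>0. \<bar>t - s\<bar> < d' \<longrightarrow> \<bar>u t - u s\<bar> < d"
      using u d by blast
    show "\<exists>\<delta>>0. \<forall>t\<ge>0. \<forall>s\<ge>0. \<bar>t - s\<bar> < \<delta> \<longrightarrow> \<bar>\<phi> (u t) - \<phi> (u s)\<bar> < \<epsilon>"
    proof (intro exI[of _ d'] conjI allI impI)
      fix t s :: real assume ts: "t \<ge> 0" "s \<ge> 0" "\<bar>t - s\<bar> < d'"
      then have "\<bar>u t - u s\<bar> < d" using d' by auto
      moreover have "u t \<in> {-M..M}" "u s \<in> {-M..M}" using M ts by (auto simp: abs_le_iff)
      ultimately show "\<bar>\<phi> (u t) - \<phi> (u s)\<bar> < \<epsilon>" using d by (auto simp: dist_real_def)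
    qed (use d' in auto)
  qed
  then show ?thesis using b by (simp add: nice_def)
qed

lemma mvt_within:
  assumes der: "\<forall>t\<ge>0. (u has_real_derivative u' t) (at t within {0..})"
    and ab: "0 \<le> a" "a < b"
  shows "\<exists>\<xi>. a < \<xi> \<and> \<xi> < b \<and> u b - u a = u' \<xi> * (b - a)"
proof -
  have "\<And>x. a \<le> x \<Longrightarrow> x \<le> b \<Longrightarrow> (u has_derivative (\<lambda>h. u' x * h)) (at x within {a..b})"
  proof -
    fix x assume "a \<le> x" "x \<le> b"
    then have "(u has_real_derivative u' x) (at x within {0..})" using der ab by auto
    then have "(u has_real_derivative u' x) (at x within {a..b})"
      by (rule DERIV_subset) (use ab in auto)
    then show "(u has_derivative (\<lambda>h. u' x * h)) (at x within {a..b})"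
      by (simp add: has_field_derivative_def)
  qed
  from mvt_simple[OF ab(2), of u "\<lambda>x h. u' x * h", OF this] show ?thesis by auto
qed

lemma mvt_glob:
  assumes der: "\<forall>x. (P has_real_derivative P' x) (at x)" and ab: "a \<le> b"
  shows "\<exists>\<xi>. a \<le> \<xi> \<and> \<xi> \<le> b \<and> P b - P a = P' \<xi> * (b - a)"
proof -
  have "\<And>x. a \<le> x \<Longrightarrow> x \<le> b \<Longrightarrow> (P has_derivative (\<lambda>h. P' x * h)) (at x within {a..b})"
    using der by (simp add: has_field_derivative_def has_derivative_at_withinI)
  from mvt_very_simple[OF ab, of P "\<lambda>x h. P' x * h", OF this] show ?thesis by auto
qed

lemma nice_deriv:
  assumes der: "\<forall>t\<ge>0. (u has_real_derivative u' t) (at t within {0..})"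
    and bu: "bnd u" and bu': "bnd u'"
  shows "nice u"
proof -
  obtain M where M: "M>0" "\<forall>t\<ge>0. \<bar>u' t\<bar> \<le> M" using bnd_bound[OF bu'] by blast
  have lip: "\<bar>u t - u s\<bar> \<le> M * (t - s)" if st: "0 \<le> s" "s \<le> t" for s t
  proof (cases "s = t")
    case False
    then have "s < t" using st by simp
    then obtain \<xi> where xi: "s < \<xi>" "\<xi> < t" "u t - u s = u' \<xi> * (t - s)"
      using mvt_within[OF der, of s t] st by auto
    have "\<bar>u' \<xi>\<bar> \<le> M" using M xi st by auto
    then have "\<bar>u' \<xi>\<bar> * (t - s) \<le> M * (t - s)" using st by (intro mult_right_mono) auto
    then show ?thesis using xi st by (simp add: abs_mult)
  qed simp
  have "ucont u" unfolding ucont_def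
  proof (intro allI impI)
    fix \<epsilon>::real assume e: "\<epsilon>>0"
    show "\<exists>\<delta>>0. \<forall>t\<ge>0. \<forall>s\<ge>0. \<bar>t - s\<bar> < \<delta> \<longrightarrow> \<bar>u t - u s\<bar> < \<epsilon>"
    proof (intro exI[of _ "\<epsilon>/M"] conjI allI impI)
      show "\<epsilon>/M > 0" using e M by simp
      fix t s :: real assume ts: "t\<ge>0" "s\<ge>0" "\<bar>t-s\<bar> < \<epsilon>/M"
      have "\<bar>u t - u s\<bar> \<le> M * \<bar>t - s\<bar>"
      proof (cases "s \<le> t")
        case True then show ?thesis using lip[of s t] ts by simp
      next
        case False then show ?thesis using lip[of t s] ts by (simp add: abs_minus_commute)
      qed
      also have "\<dots> < M * (\<epsilon>/M)" using ts M by (intro mult_strict_left_mono) auto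
      finally show "\<bar>u t - u s\<bar> < \<epsilon>" using M by simp
    qed
  qed
  then show ?thesis using bu by (simp add: nice_def)
qed

lemma tendsto_sv: "(u \<longlongrightarrow> L) at_top \<Longrightarrow> sv u"
proof -
  assume lim: "(u \<longlongrightarrow> L) at_top"
  show ?thesis unfolding sv_def
  proof (intro allI impI)
    fix \<epsilon>::real assume e: "\<epsilon>>0"
    then have "\<epsilon>/2 > 0" by simp
    then have "eventually (\<lambda>t. dist (u t) L < \<epsilon>/2) at_top" using lim unfolding tendsto_iff by blast
    then obtain T where T: "\<forall>t\<ge>T. \<bar>u t - L\<bar> < \<epsilon>/2"
      by (auto simp: eventually_at_top_linorder dist_real_def)
    show "\<exists>T. \<forall>t\<ge>T. \<forall>\<tau>. 0 \<le> \<tau> \<and> \<tau> \<le> 1 \<longrightarrow> \<bar>u (t+\<tau>) - u t\<bar> < \<epsilon>"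
    proof (intro exI[of _ T] allI impI)
      fix t \<tau> :: real assume "T \<le> t" "0 \<le> \<tau> \<and> \<tau> \<le> 1"
      then have "\<bar>u (t+\<tau>) - L\<bar> < \<epsilon>/2" "\<bar>u t - L\<bar> < \<epsilon>/2" using T by auto
      then show "\<bar>u (t+\<tau>) - u t\<bar> < \<epsilon>" by linarith
    qed
  qed
qed

lemma sv_add: "sv u \<Longrightarrow> sv v \<Longrightarrow> sv (\<lambda>t. u t + v t)"
  unfolding sv_def
proof (intro allI impI)
  fix \<epsilon> :: real assume e: "\<epsilon> > 0" and
    u: "\<forall>\<epsilon>>0. \<exists>T. \<forall>t\<ge>T. \<forall>\<tau>. 0 \<le> \<tau> \<and> \<tau> \<le> 1 \<longrightarrow> \<bar>u (t+\<tau>) - u t\<bar> < \<epsilon>" and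
    v: "\<forall>\<epsilon>>0. \<exists>T. \<forall>t\<ge>T. \<forall>\<tau>. 0 \<le> \<tau> \<and> \<tau> \<le> 1 \<longrightarrow> \<bar>v (t+\<tau>) - v t\<bar> < \<epsilon>"
  have "\<epsilon>/2 > 0" using e by simp
  then obtain T1 T2 where T1: "\<forall>t\<ge>T1. \<forall>\<tau>. 0 \<le> \<tau> \<and> \<tau> \<le> 1 \<longrightarrow> \<bar>u (t+\<tau>) - u t\<bar> < \<epsilon>/2"
    and T2: "\<forall>t\<ge>T2. \<forall>\<tau>. 0 \<le> \<tau> \<and> \<tau> \<le> 1 \<longrightarrow> \<bar>v (t+\<tau>) - v t\<bar> < \<epsilon>/2"
    using u v by meson
  show "\<exists>T. \<forall>t\<ge>T. \<forall>\<tau>. 0 \<le> \<tau> \<and> \<tau> \<le> 1 \<longrightarrow> \<bar>u (t+\<tau>) + v (t+\<tau>) - (u t + v t)\<bar> < \<epsilon>"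
  proof (intro exI[of _ "max T1 T2"] allI impI)
    fix t \<tau> :: real assume "max T1 T2 \<le> t" "0 \<le> \<tau> \<and> \<tau> \<le> 1"
    then have "\<bar>u (t+\<tau>) - u t\<bar> < \<epsilon>/2" "\<bar>v (t+\<tau>) - v t\<bar> < \<epsilon>/2" using T1 T2 by auto
    then show "\<bar>u (t+\<tau>) + v (t+\<tau>) - (u t + v t)\<bar> < \<epsilon>" by linarith
  qed
qed

lemma sv_const: "sv (\<lambda>t. c)" unfolding sv_def by auto

lemma sv_cmult: "sv u \<Longrightarrow> sv (\<lambda>t. c * u t)"
proof (cases "c = 0")
  case False
  assume s: "sv u"
  show ?thesis unfolding sv_def
  proof (intro allI impI)
    fix \<epsilon>::real assume "\<epsilon> > 0"
    then have "\<epsilon>/\<bar>c\<bar> > 0" using False by simp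
    then obtain T where T: "\<forall>t\<ge>T. \<forall>\<tau>. 0 \<le> \<tau> \<and> \<tau> \<le> 1 \<longrightarrow> \<bar>u (t+\<tau>) - u t\<bar> < \<epsilon>/\<bar>c\<bar>"
      using s unfolding sv_def by blast
    show "\<exists>T. \<forall>t\<ge>T. \<forall>\<tau>. 0 \<le> \<tau> \<and> \<tau> \<le> 1 \<longrightarrow> \<bar>c * u (t+\<tau>) - c * u t\<bar> < \<epsilon>"
    proof (intro exI[of _ T] allI impI)
      fix t \<tau> :: real assume "T \<le> t" "0 \<le> \<tau> \<and> \<tau> \<le> 1"
      then have "\<bar>u (t+\<tau>) - u t\<bar> < \<epsilon>/\<bar>c\<bar>" using T by auto
      then have "\<bar>c\<bar> * \<bar>u (t+\<tau>) - u t\<bar> < \<epsilon>" using False by (simp add: field_simps)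
      then show "\<bar>c * u (t+\<tau>) - c * u t\<bar> < \<epsilon>" by (simp add: abs_mult[symmetric] right_diff_distrib)
    qed
  qed
qed (simp add: sv_const)

lemma sv_uminus: "sv u \<Longrightarrow> sv (\<lambda>t. - u t)"
  using sv_cmult[of u "-1"] by simp
lemma sv_diff: "sv u \<Longrightarrow> sv v \<Longrightarrow> sv (\<lambda>t. u t - v t)"
  using sv_add[OF _ sv_uminus, of u v] by simp
lemma sv_divc: "sv u \<Longrightarrow> sv (\<lambda>t. u t / c)"
  using sv_cmult[of u "1/c"] by simp
lemma sv_sum: "finite A \<Longrightarrow> (\<And>i. i \<in> A \<Longrightarrow> sv (f i)) \<Longrightarrow> sv (\<lambda>t. \<Sum>i\<in>A. f i t)"
  by (induction A rule: finite_induct) (auto simp: sv_const intro!: sv_add)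

lemma sv_comp:
  assumes cont: "continuous_on UNIV \<phi>" and bu: "bnd u" and s: "sv u"
  shows "sv (\<lambda>t. \<phi> (u t))"
proof -
  obtain M where M: "M > 0" "\<forall>t\<ge>0. \<bar>u t\<bar> \<le> M" using bnd_bound[OF bu] by blast
  have uc: "uniformly_continuous_on {-M..M} \<phi>"
    by (rule compact_uniformly_continuous) (auto intro: continuous_on_subset[OF cont])
  show ?thesis unfolding sv_def
  proof (intro allI impI)
    fix \<epsilon> :: real assume e: "\<epsilon> > 0"
    obtain d where d: "d > 0" "\<forall>x\<in>{-M..M}. \<forall>x'\<in>{-M..M}. dist x' x < d \<longrightarrow> dist (\<phi> x') (\<phi> x) < \<epsilon>"
      using uc e unfolding uniformly_continuous_on_def by blast
    obtain T where T: "\<forall>t\<ge>T. \<forall>\<tau>. 0 \<le> \<tau> \<and> \<tau> \<le> 1 \<longrightarrow> \<bar>u (t+\<tau>) - u t\<bar> < d"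
      using s d unfolding sv_def by blast
    show "\<exists>T. \<forall>t\<ge>T. \<forall>\<tau>. 0 \<le> \<tau> \<and> \<tau> \<le> 1 \<longrightarrow> \<bar>\<phi> (u (t+\<tau>)) - \<phi> (u t)\<bar> < \<epsilon>"
    proof (intro exI[of _ "max T 0"] allI impI)
      fix t \<tau> :: real assume tt: "max T 0 \<le> t" "0 \<le> \<tau> \<and> \<tau> \<le> 1"
      then have "\<bar>u (t+\<tau>) - u t\<bar> < d" using T by auto
      moreover have "t + \<tau> \<ge> 0" "t \<ge> 0" using tt by auto
      then have "u (t+\<tau>) \<in> {-M..M}" "u t \<in> {-M..M}" using M(2)[rule_format, of t] M(2)[rule_format, of "t+\<tau>"]
        by (auto simp: abs_le_iff)
      ultimately show "\<bar>\<phi> (u (t+\<tau>)) - \<phi> (u t)\<bar> < \<epsilon>" using d by (auto simp: dist_real_def)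
    qed
  qed
qed

lemma sv_inv:
  assumes sm: "strict_mono \<phi>" and cont: "continuous_on UNIV \<phi>" and bu: "bnd u"
    and s: "sv (\<lambda>t. \<phi> (u t))"
  shows "sv u"
proof -
  obtain M where M: "M>0" "\<forall>t\<ge>0. \<bar>u t\<bar> \<le> M" using bnd_bound[OF bu] by blast
  have mono: "mono \<phi>" using sm by (rule strict_mono_mono)
  show ?thesis unfolding sv_def
  proof (intro allI impI)
    fix \<epsilon>::real assume e: "\<epsilon>>0"
    have cc: "continuous_on {-M..M} (\<lambda>a. \<phi> (a + \<epsilon>) - \<phi> a)"
      by (intro continuous_intros continuous_on_compose2[OF cont]) auto
    obtain a0 where a0: "a0 \<in> {-M..M}" "\<forall>a\<in>{-M..M}. \<phi> (a0+\<epsilon>) - \<phi> a0 \<le> \<phi> (a+\<epsilon>) - \<phi> a"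
      using continuous_attains_inf[OF compact_Icc _ cc] M by fastforce
    define c where "c = \<phi> (a0+\<epsilon>) - \<phi> a0"
    have c: "c > 0" using sm e unfolding c_def strict_mono_def by simp
    have key: "\<bar>a - b\<bar> < \<epsilon>" if ab: "a \<in> {-M..M}" "b \<in> {-M..M}" "\<bar>\<phi> a - \<phi> b\<bar> < c" for a b
    proof (rule ccontr)
      assume "\<not> \<bar>a - b\<bar> < \<epsilon>"
      then have "a + \<epsilon> \<le> b \<or> b + \<epsilon> \<le> a" by auto
      then show False
      proof
        assume h: "a + \<epsilon> \<le> b"
        have "\<phi> (a+\<epsilon>) \<le> \<phi> b" using mono h by (simp add: monoD)
        moreover have "c \<le> \<phi> (a+\<epsilon>) - \<phi> a" using a0(2) ab(1) unfolding c_def by blast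
        ultimately show False using ab(3) by linarith
      next
        assume h: "b + \<epsilon> \<le> a"
        have "\<phi> (b+\<epsilon>) \<le> \<phi> a" using mono h by (simp add: monoD)
        moreover have "c \<le> \<phi> (b+\<epsilon>) - \<phi> b" using a0(2) ab(2) unfolding c_def by blast
        ultimately show False using ab(3) by linarith
      qed
    qed
    obtain T where T: "\<forall>t\<ge>T. \<forall>\<tau>. 0 \<le> \<tau> \<and> \<tau> \<le> 1 \<longrightarrow> \<bar>\<phi> (u (t+\<tau>)) - \<phi> (u t)\<bar> < c"
      using s c unfolding sv_def by blast
    show "\<exists>T. \<forall>t\<ge>T. \<forall>\<tau>. 0 \<le> \<tau> \<and> \<tau> \<le> 1 \<longrightarrow> \<bar>u (t+\<tau>) - u t\<bar> < \<epsilon>"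
    proof (intro exI[of _ "max T 0"] allI impI)
      fix t \<tau> :: real assume tt: "max T 0 \<le> t" "0 \<le> \<tau> \<and> \<tau> \<le> 1"
      then have "\<bar>\<phi> (u (t+\<tau>)) - \<phi> (u t)\<bar> < c" using T by auto
      moreover have "t + \<tau> \<ge> 0" "t \<ge> 0" using tt by auto
      then have "u (t+\<tau>) \<in> {-M..M}" "u t \<in> {-M..M}" using M(2)[rule_format, of t] M(2)[rule_format, of "t+\<tau>"]
        by (auto simp: abs_le_iff)
      ultimately show "\<bar>u (t+\<tau>) - u t\<bar> < \<epsilon>" using key by blast
    qed
  qed
qed

lemma inv_tendsto:
  fixes \<phi> :: "real \<Rightarrow> real" and u :: "'a \<Rightarrow> real"
  assumes sm: "strict_mono \<phi>" and lim: "((\<lambda>t. \<phi> (u t)) \<longlongrightarrow> \<phi> a) F"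
  shows "(u \<longlongrightarrow> a) F"
  unfolding tendsto_iff
proof (intro allI impI)
  fix \<epsilon>::real assume e: "\<epsilon>>0"
  have lo: "\<phi> (a - \<epsilon>) < \<phi> a" and hi: "\<phi> a < \<phi> (a+\<epsilon>)" using sm e by (auto simp: strict_mono_less)
  have "eventually (\<lambda>t. \<phi> (u t) > \<phi> (a-\<epsilon>)) F" using order_tendstoD(1)[OF lim lo] .
  moreover have "eventually (\<lambda>t. \<phi> (u t) < \<phi> (a+\<epsilon>)) F" using order_tendstoD(2)[OF lim hi] .
  ultimately show "eventually (\<lambda>t. dist (u t) a < \<epsilon>) F"
  proof eventually_elim
    case (elim t)
    then have "a - \<epsilon> < u t" "u t < a + \<epsilon>" using sm by (auto simp: strict_mono_less)
    then show ?case by (simp add: dist_real_def abs_less_iff)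
  qed
qed

lemma sv_deriv_tendsto0:
  assumes der: "\<forall>t\<ge>0. (u has_real_derivative u' t) (at t within {0..})"
    and uc: "ucont u'" and s: "sv u"
  shows "(u' \<longlongrightarrow> 0) at_top"
  unfolding tendsto_iff
proof (intro allI impI)
  fix \<epsilon>::real assume e: "\<epsilon> > 0"
  then have "\<epsilon>/2 > 0" by simp
  then obtain \<delta> where \<delta>: "\<delta>>0" "\<forall>t\<ge>0. \<forall>s\<ge>0. \<bar>t - s\<bar> < \<delta> \<longrightarrow> \<bar>u' t - u' s\<bar> < \<epsilon>/2"
    using uc unfolding ucont_def by blast
  define \<tau> where "\<tau> = min (\<delta>/2) 1"
  have \<tau>: "\<tau> > 0" "\<tau> \<le> 1" "\<tau> < \<delta>" using \<delta> by (auto simp: \<tau>_def)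
  have "\<epsilon>*\<tau>/2 > 0" using e \<tau> by simp
  then obtain T where T: "\<forall>t\<ge>T. \<forall>\<sigma>. 0 \<le> \<sigma> \<and> \<sigma> \<le> 1 \<longrightarrow> \<bar>u (t+\<sigma>) - u t\<bar> < \<epsilon>*\<tau>/2"
    using s unfolding sv_def by blast
  show "eventually (\<lambda>t. dist (u' t) 0 < \<epsilon>) at_top"
    unfolding eventually_at_top_linorder
  proof (intro exI[of _ "max T 0"] allI impI)
    fix t assume tT: "max T 0 \<le> t"
    obtain \<xi> where xi: "t < \<xi>" "\<xi> < t + \<tau>" "u (t+\<tau>) - u t = u' \<xi> * \<tau>"
      using mvt_within[OF der, of t "t+\<tau>"] tT \<tau> by auto
    have "T \<le> t" using tT by simp
    then have "\<bar>u (t+\<tau>) - u t\<bar> < \<epsilon>*\<tau>/2" using T \<tau> by auto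
    then have "\<bar>u' \<xi> * \<tau>\<bar> < \<epsilon>*\<tau>/2" using xi(3) by simp
    then have "\<bar>u' \<xi>\<bar> * \<tau> < (\<epsilon>/2) * \<tau>" using \<tau> by (simp add: abs_mult)
    then have "\<bar>u' \<xi>\<bar> < \<epsilon>/2" using \<tau> mult_less_cancel_right_pos by blast
    moreover have "\<bar>u' t - u' \<xi>\<bar> < \<epsilon>/2" using \<delta>(2) xi \<tau> tT by auto
    moreover have "\<bar>u' t\<bar> \<le> \<bar>u' t - u' \<xi>\<bar> + \<bar>u' \<xi>\<bar>"
      using abs_triangle_ineq[of "u' t - u' \<xi>" "u' \<xi>"] by simp
    ultimately have "\<bar>u' t\<bar> < \<epsilon>" by linarith
    then show "dist (u' t) 0 < \<epsilon>" by (simp add: dist_real_def)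
  qed
qed

lemma deriv_nonpos_antimono:
  assumes der: "\<forall>t\<ge>0. (V has_real_derivative V' t) (at t within {0..})"
    and np: "\<forall>t\<ge>0. V' t \<le> 0"
  shows "\<forall>s t. 0 \<le> s \<longrightarrow> s \<le> t \<longrightarrow> V t \<le> V s"
proof (intro allI impI)
  fix s t :: real assume st: "0 \<le> s" "s \<le> t"
  show "V t \<le> V s"
  proof (cases "s = t")
    case False
    then obtain \<xi> where xi: "s < \<xi>" "\<xi> < t" "V t - V s = V' \<xi> * (t - s)"
      using mvt_within[OF der, of s t] st by auto
    have "V' \<xi> * (t - s) \<le> 0" using np xi st by (intro mult_nonpos_nonneg) auto
    then show ?thesis using xi by simp
  qed simp
qed

lemma antimono_sv:
  assumes mono: "\<forall>s t. 0 \<le> s \<longrightarrow> s \<le> t \<longrightarrow> V t \<le> V s" and pos: "\<forall>t\<ge>0. V t \<ge> 0"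
  shows "sv V"
  unfolding sv_def
proof (intro allI impI)
  fix \<epsilon>::real assume e: "\<epsilon>>0"
  define I where "I = Inf (V ` {0..})"
  have bb: "bdd_below (V ` {0..})" using pos by (auto intro!: bdd_belowI[of _ 0])
  have "I < I + \<epsilon>" using e by simp
  then obtain T where T: "T \<ge> 0" "V T < I + \<epsilon>"
    unfolding I_def using cInf_lessD[of "V ` {0..}" "I + \<epsilon>"] by (auto simp: I_def)
  show "\<exists>T. \<forall>t\<ge>T. \<forall>\<tau>. 0 \<le> \<tau> \<and> \<tau> \<le> 1 \<longrightarrow> \<bar>V (t+\<tau>) - V t\<bar> < \<epsilon>"
  proof (intro exI[of _ T] allI impI)
    fix t \<tau> :: real assume tt: "T \<le> t" "0 \<le> \<tau> \<and> \<tau> \<le> 1"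
    have "I \<le> V (t+\<tau>)" unfolding I_def using bb tt T by (intro cInf_lower) auto
    moreover have "V (t+\<tau>) \<le> V t" using mono tt T by auto
    moreover have "V t \<le> V T" using mono tt T by auto
    ultimately show "\<bar>V (t+\<tau>) - V t\<bar> < \<epsilon>" using T by linarith
  qed
qed

definition prim :: "(real \<Rightarrow> real) \<Rightarrow> real \<Rightarrow> real \<Rightarrow> real" where
  "prim \<phi> a = (SOME P. P a = 0 \<and> (\<forall>s. (P has_real_derivative (\<phi> s - \<phi> a)) (at s)))"

lemma prim_ex:
  assumes cont: "continuous_on UNIV \<phi>"
  shows "\<exists>P. P a = 0 \<and> (\<forall>s. (P has_real_derivative (\<phi> s - \<phi> a)) (at s))"
proof -
  have ic: "isCont (\<lambda>x. \<phi> x - \<phi> a) x" for x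
    using cont by (intro continuous_intros) (simp add: continuous_on_eq_continuous_at)
  have "\<exists>F. \<forall>x :: real. -\<infinity> < ereal x \<longrightarrow> ereal x < \<infinity> \<longrightarrow> (F has_vector_derivative (\<phi> x - \<phi> a)) (at x)"
    by (rule einterval_antiderivative) (use ic in auto)
  then obtain F where F: "\<And>x. (F has_vector_derivative (\<phi> x - \<phi> a)) (at x)" by auto
  have "((\<lambda>s. F s - F a) has_vector_derivative (\<phi> x - \<phi> a) - 0) (at x)" for x
    by (intro has_vector_derivative_diff F has_vector_derivative_const)
  then show ?thesis
    by (intro exI[of _ "\<lambda>s. F s - F a"]) (auto simp: has_real_derivative_iff_has_vector_derivative)
qed

lemma prim_zero: "continuous_on UNIV \<phi> \<Longrightarrow> prim \<phi> a a = 0"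
  unfolding prim_def using someI_ex[OF prim_ex] by blast

lemma prim_deriv: "continuous_on UNIV \<phi> \<Longrightarrow> (prim \<phi> a has_real_derivative (\<phi> s - \<phi> a)) (at s)"
  unfolding prim_def using someI_ex[OF prim_ex] by blast

lemma prim_lower1:
  assumes cont: "continuous_on UNIV \<phi>" and mono: "mono \<phi>" and ab: "a \<le> b" and bs: "b \<le> s"
  shows "prim \<phi> a s \<ge> (s - b) * (\<phi> b - \<phi> a)"
proof -
  have der: "\<forall>x. (prim \<phi> a has_real_derivative (\<phi> x - \<phi> a)) (at x)" using prim_deriv[OF cont] by blast
  obtain \<xi> where xi: "a \<le> \<xi>" "\<xi> \<le> b" "prim \<phi> a b - prim \<phi> a a = (\<phi> \<xi> - \<phi> a) * (b - a)"
    using mvt_glob[OF der ab] by blast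
  have "\<phi> \<xi> \<ge> \<phi> a" using monoD[OF mono xi(1)] .
  then have "(\<phi> \<xi> - \<phi> a) * (b - a) \<ge> 0" using ab by simp
  then have pb: "prim \<phi> a b \<ge> 0" using xi prim_zero[OF cont] by simp
  obtain \<zeta> where z: "b \<le> \<zeta>" "\<zeta> \<le> s" "prim \<phi> a s - prim \<phi> a b = (\<phi> \<zeta> - \<phi> a) * (s - b)"
    using mvt_glob[OF der bs] by blast
  have "\<phi> \<zeta> \<ge> \<phi> b" using monoD[OF mono z(1)] .
  then have "(\<phi> \<zeta> - \<phi> a) * (s - b) \<ge> (\<phi> b - \<phi> a) * (s - b)" using bs
    by (intro mult_right_mono) auto
  then show ?thesis using z pb by (simp add: mult.commute)
qed

lemma prim_lower2:
  assumes cont: "continuous_on UNIV \<phi>" and mono: "mono \<phi>" and ab: "b \<le> a" and bs: "s \<le> b"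
  shows "prim \<phi> a s \<ge> (b - s) * (\<phi> a - \<phi> b)"
proof -
  have der: "\<forall>x. (prim \<phi> a has_real_derivative (\<phi> x - \<phi> a)) (at x)" using prim_deriv[OF cont] by blast
  obtain \<xi> where xi: "b \<le> \<xi>" "\<xi> \<le> a" "prim \<phi> a a - prim \<phi> a b = (\<phi> \<xi> - \<phi> a) * (a - b)"
    using mvt_glob[OF der ab] by blast
  have "\<phi> \<xi> \<le> \<phi> a" using monoD[OF mono xi(2)] .
  then have "(\<phi> \<xi> - \<phi> a) * (a - b) \<le> 0" using ab by (intro mult_nonpos_nonneg) auto
  then have pb: "prim \<phi> a b \<ge> 0" using xi prim_zero[OF cont] by simp
  obtain \<zeta> where z: "s \<le> \<zeta>" "\<zeta> \<le> b" "prim \<phi> a b - prim \<phi> a s = (\<phi> \<zeta> - \<phi> a) * (b - s)"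
    using mvt_glob[OF der bs] by blast
  have "\<phi> \<zeta> \<le> \<phi> b" using monoD[OF mono z(2)] .
  then have "(\<phi> \<zeta> - \<phi> a) * (b - s) \<le> (\<phi> b - \<phi> a) * (b - s)" using bs
    by (intro mult_right_mono) auto
  then show ?thesis using z pb by (simp add: algebra_simps)
qed

lemma prim_nonneg:
  assumes cont: "continuous_on UNIV \<phi>" and mono: "mono \<phi>"
  shows "prim \<phi> a s \<ge> 0"
proof (cases "a \<le> s")
  case True then show ?thesis using prim_lower1[OF cont mono order_refl True] by simp
next
  case False then show ?thesis using prim_lower2[OF cont mono order_refl, of s] by simp
qed

lemma prim_bounded:
  assumes cont: "continuous_on UNIV \<phi>" and sm: "strict_mono \<phi>"
  shows "\<exists>M. \<forall>s. prim \<phi> a s \<le> C \<longrightarrow> \<bar>s\<bar> \<le> M"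
proof -
  have mono: "mono \<phi>" using sm by (rule strict_mono_mono)
  define c1 where "c1 = \<phi> (a+1) - \<phi> a"
  define c2 where "c2 = \<phi> a - \<phi> (a-1)"
  have c: "c1 > 0" "c2 > 0" using sm unfolding c1_def c2_def by (simp_all add: strict_mono_less)
  have "\<forall>s. prim \<phi> a s \<le> C \<longrightarrow> \<bar>s\<bar> \<le> \<bar>a\<bar> + 1 + \<bar>C\<bar>/c1 + \<bar>C\<bar>/c2"
  proof (intro allI impI)
    fix s assume sC: "prim \<phi> a s \<le> C"
    have up: "s \<le> a + 1 + \<bar>C\<bar>/c1"
    proof (rule ccontr)
      assume "\<not> ?thesis"
      then have s0: "s > a + 1 + \<bar>C\<bar>/c1" by simp
      have "\<bar>C\<bar>/c1 \<ge> 0" using c by simp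
      then have s1: "s \<ge> a + 1" and s2: "s - (a+1) > \<bar>C\<bar>/c1" using s0 by linarith+
      have "prim \<phi> a s \<ge> (s - (a+1)) * c1" using prim_lower1[OF cont mono _ s1] by (simp add: c1_def)
      moreover have "(s - (a+1)) * c1 > \<bar>C\<bar>/c1 * c1" using mult_strict_right_mono[OF s2 c(1)] .
      moreover have "\<bar>C\<bar>/c1 * c1 = \<bar>C\<bar>" using c by simp
      ultimately show False using sC by linarith
    qed
    have lo: "s \<ge> a - 1 - \<bar>C\<bar>/c2"
    proof (rule ccontr)
      assume "\<not> ?thesis"
      then have s0: "s < a - 1 - \<bar>C\<bar>/c2" by simp
      have "\<bar>C\<bar>/c2 \<ge> 0" using c by simp
      then have s1: "s \<le> a - 1" and s2: "(a - 1) - s > \<bar>C\<bar>/c2" using s0 by linarith+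
      have "prim \<phi> a s \<ge> ((a - 1) - s) * c2" using prim_lower2[OF cont mono _ s1] by (simp add: c2_def)
      moreover have "((a-1) - s) * c2 > \<bar>C\<bar>/c2 * c2" using mult_strict_right_mono[OF s2 c(2)] .
      moreover have "\<bar>C\<bar>/c2 * c2 = \<bar>C\<bar>" using c by simp
      ultimately show False using sC by linarith
    qed
    have "\<bar>C\<bar>/c1 \<ge> 0" "\<bar>C\<bar>/c2 \<ge> 0" using c by auto
    then show "\<bar>s\<bar> \<le> \<bar>a\<bar> + 1 + \<bar>C\<bar>/c1 + \<bar>C\<bar>/c2"
      unfolding abs_le_iff using up lo abs_ge_self[of a] abs_ge_minus_self[of a] by linarith
  qed
  then show ?thesis by blast
qed

lemma prim_tendsto:
  fixes u :: "'b \<Rightarrow> real"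
  assumes cont: "continuous_on UNIV \<phi>" and sm: "strict_mono \<phi>"
    and lim: "((\<lambda>t. prim \<phi> a (u t)) \<longlongrightarrow> 0) F"
  shows "(u \<longlongrightarrow> a) F"
  unfolding tendsto_iff
proof (intro allI impI)
  fix \<epsilon> :: real assume e: "\<epsilon> > 0"
  have mono: "mono \<phi>" using sm by (rule strict_mono_mono)
  define c1 where "c1 = (\<epsilon>/2) * (\<phi> (a+\<epsilon>/2) - \<phi> a)"
  define c2 where "c2 = (\<epsilon>/2) * (\<phi> a - \<phi> (a-\<epsilon>/2))"
  have d1: "\<phi> (a+\<epsilon>/2) - \<phi> a > 0" using sm e by (simp add: strict_mono_less)
  have d2: "\<phi> a - \<phi> (a-\<epsilon>/2) > 0" using sm e by (simp add: strict_mono_less)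
  have c: "c1 > 0" "c2 > 0" unfolding c1_def c2_def using d1 d2 e by simp_all
  have "min c1 c2 > 0" using c by simp
  then have "eventually (\<lambda>t. dist (prim \<phi> a (u t)) 0 < min c1 c2) F"
    using lim unfolding tendsto_iff by blast
  then show "eventually (\<lambda>t. dist (u t) a < \<epsilon>) F"
  proof eventually_elim
    case (elim t)
    then have pt: "prim \<phi> a (u t) < c1" "prim \<phi> a (u t) < c2" by (auto simp: dist_real_def)
    have "u t < a + \<epsilon>"
    proof (rule ccontr)
      assume "\<not> ?thesis"
      then have s1: "a + \<epsilon>/2 \<le> u t" and s2: "u t - (a + \<epsilon>/2) \<ge> \<epsilon>/2" using e by auto
      have "prim \<phi> a (u t) \<ge> (u t - (a+\<epsilon>/2)) * (\<phi> (a+\<epsilon>/2) - \<phi> a)"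
        using prim_lower1[OF cont mono _ s1] e by simp
      moreover have "(u t - (a+\<epsilon>/2)) * (\<phi> (a+\<epsilon>/2) - \<phi> a) \<ge> c1"
        unfolding c1_def using mult_right_mono[OF s2 less_imp_le[OF d1]] .
      ultimately show False using pt by linarith
    qed
    moreover have "u t > a - \<epsilon>"
    proof (rule ccontr)
      assume "\<not> ?thesis"
      then have s1: "u t \<le> a - \<epsilon>/2" and s2: "(a - \<epsilon>/2) - u t \<ge> \<epsilon>/2" using e by auto
      have "prim \<phi> a (u t) \<ge> ((a-\<epsilon>/2) - u t) * (\<phi> a - \<phi> (a-\<epsilon>/2))"
        using prim_lower2[OF cont mono _ s1] e by simp
      moreover have "((a-\<epsilon>/2) - u t) * (\<phi> a - \<phi> (a-\<epsilon>/2)) \<ge> c2"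
        unfolding c2_def using mult_right_mono[OF s2 less_imp_le[OF d2]] .
      ultimately show False using pt by linarith
    qed
    ultimately show ?case by (simp add: dist_real_def abs_less_iff)
  qed
qed

lemma bw_multi:
  fixes X :: "nat \<Rightarrow> nat \<Rightarrow> real"
  assumes "\<forall>k<m. \<forall>j. \<bar>X j k\<bar> \<le> M"
  shows "\<exists>r L. strict_mono r \<and> (\<forall>k<m. (\<lambda>j. X (r j) k) \<longlonglongrightarrow> L k)"
  using assms
proof (induction m)
  case 0 then show ?case by (intro exI[of _ id]) (auto simp: strict_mono_def)
next
  case (Suc m)
  then obtain r L where r: "strict_mono r" "\<forall>k<m. (\<lambda>j. X (r j) k) \<longlonglongrightarrow> L k" by auto
  obtain s where s: "strict_mono s" "monoseq (\<lambda>j. X (r (s j)) m)" using seq_monosub[of "\<lambda>j. X (r j) m"] by blast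
  have "Bseq (\<lambda>j. X (r (s j)) m)" using Suc.prems by (intro BseqI'[of _ M]) auto
  then have "convergent (\<lambda>j. X (r (s j)) m)" using Bseq_monoseq_convergent s(2) by blast
  then obtain l where l: "(\<lambda>j. X (r (s j)) m) \<longlonglongrightarrow> l" by (auto simp: convergent_def)
  have "\<forall>k<Suc m. (\<lambda>j. X ((r \<circ> s) j) k) \<longlonglongrightarrow> (L(m := l)) k"
  proof (intro allI impI)
    fix k assume "k < Suc m"
    show "(\<lambda>j. X ((r \<circ> s) j) k) \<longlonglongrightarrow> (L(m := l)) k"
    proof (cases "k = m")
      case True then show ?thesis using l by simp
    next
      case False
      then have "(\<lambda>j. X (r j) k) \<longlonglongrightarrow> L k" using r \<open>k < Suc m\<close> by auto
      from LIMSEQ_subseq_LIMSEQ[OF this s(1)] False show ?thesis by (simp add: o_def)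
    qed
  qed
  moreover have "strict_mono (r \<circ> s)" using r(1) s(1) by (rule strict_mono_o)
  ultimately show ?case by blast
qed

lemma mv_swap: "(\<Sum>i<n. v i * mv A k w i) = (\<Sum>j<k. w j * mv (tr A) n v j)"
  unfolding mv_def tr_def
  by (simp add: sum_distrib_left sum.swap[of _ "{..<n}"] mult.commute mult.left_commute)

lemma mv_diff: "mv A k u i - mv A k v i = mv A k (\<lambda>j. u j - v j) i"
  unfolding mv_def by (simp add: sum_subtractf right_diff_distrib)

lemma mv_add: "mv A k u i + mv A k v i = mv A k (\<lambda>j. u j + v j) i"
  unfolding mv_def by (simp add: sum.distrib distrib_left)

lemma mv_cong: "(\<And>j. j < k \<Longrightarrow> u j = v j) \<Longrightarrow> mv A k u i = mv A k v i"
  unfolding mv_def by simp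

lemma nonneg_sum_le: "finite A \<Longrightarrow> (\<And>i. i \<in> A \<Longrightarrow> f i \<ge> (0::real)) \<Longrightarrow> j \<in> A \<Longrightarrow> f j \<le> sum f A"
  by (rule member_le_sum) auto

lemma incidence_colsum:
  assumes "simple_graph n m e" "k < m"
  shows "(\<Sum>i<n. incidence m e i k) = 0"
proof -
  have a: "fst (e k) < n" "snd (e k) < n" "fst (e k) \<noteq> snd (e k)" using assms by (auto simp: simple_graph_def)
  have "(\<Sum>i<n. incidence m e i k) = (\<Sum>i<n. (if i = fst (e k) then 1 else 0) + (if i = snd (e k) then -1 else 0))"
    using a assms(2) by (intro sum.cong) (auto simp: incidence_def)
  also have "\<dots> = 0" using a by (simp add: sum.distrib)
  finally show ?thesis .
qed

lemma incidence_sum_mv: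
  assumes "simple_graph n m e"
  shows "(\<Sum>i<n. mv (incidence m e) m F i) = 0"
proof -
  have "(\<Sum>i<n. mv (incidence m e) m F i) = (\<Sum>i<n. 1 * mv (incidence m e) m F i)" by simp
  also have "\<dots> = (\<Sum>k<m. F k * mv (tr (incidence m e)) n (\<lambda>_. 1) k)" by (rule mv_swap)
  also have "\<dots> = 0"
    using incidence_colsum[OF assms] by (intro sum.neutral) (auto simp: mv_def tr_def)
  finally show ?thesis .
qed

lemma incidence_tr:
  assumes "simple_graph n m e" "k < m"
  shows "mv (tr (incidence m e)) n H k = H (fst (e k)) - H (snd (e k))"
proof -
  have a: "fst (e k) < n" "snd (e k) < n" "fst (e k) \<noteq> snd (e k)" using assms by (auto simp: simple_graph_def)
  have "mv (tr (incidence m e)) n H k = (\<Sum>i<n. (if i = fst (e k) then H i else 0) - (if i = snd (e k) then H i else 0))"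
    unfolding mv_def tr_def using a assms(2) by (intro sum.cong) (auto simp: incidence_def)
  also have "\<dots> = H (fst (e k)) - H (snd (e k))" using a by (simp add: sum_subtractf)
  finally show ?thesis .
qed

lemma lap_row:
  "mv (laplacian p a) p z i = (\<Sum>j<p. a i j * (z i - z j))" if "i < p"
proof -
  define S where "S = (\<Sum>k<p. a i k)"
  have "mv (laplacian p a) p z i = (\<Sum>j<p. (if i = j then S * z j else 0) - a i j * z j)"
    unfolding mv_def laplacian_def S_def by (intro sum.cong refl) (auto simp: algebra_simps)
  also have "\<dots> = (\<Sum>j<p. (if i = j then S * z j else 0)) - (\<Sum>j<p. a i j * z j)"
    by (simp add: sum_subtractf)
  also have "(\<Sum>j<p. (if i = j then S * z j else 0)) = S * z i" using that by simp
  also have "S * z i - (\<Sum>j<p. a i j * z j) = (\<Sum>j<p. a i j * (z i - z j))"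
    unfolding S_def by (simp add: sum_distrib_right right_diff_distrib sum_subtractf)
  finally show ?thesis .
qed

lemma lap_quad:
  assumes bal: "balanced p a"
  shows "(\<Sum>i<p. z i * mv (laplacian p a) p z i) = (\<Sum>i<p. \<Sum>j<p. a i j * (z i - z j)^2) / 2"
proof -
  have l: "(\<Sum>i<p. z i * mv (laplacian p a) p z i) = (\<Sum>i<p. \<Sum>j<p. a i j * (z i * z i) - a i j * (z i * z j))"
    by (intro sum.cong refl) (simp add: lap_row sum_distrib_left algebra_simps)
  have s1: "(\<Sum>i<p. \<Sum>j<p. a i j * (z j * z j)) = (\<Sum>i<p. \<Sum>j<p. a i j * (z i * z i))"
  proof -
    have "(\<Sum>i<p. \<Sum>j<p. a i j * (z j * z j)) = (\<Sum>j<p. \<Sum>i<p. a i j * (z j * z j))"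
      by (rule sum.swap)
    also have "\<dots> = (\<Sum>j<p. (\<Sum>i<p. a i j) * (z j * z j))"
      by (simp add: sum_distrib_right)
    also have "\<dots> = (\<Sum>j<p. (\<Sum>i<p. a j i) * (z j * z j))"
      using bal by (intro sum.cong refl) (simp add: balanced_def)
    also have "\<dots> = (\<Sum>i<p. \<Sum>j<p. a i j * (z i * z i))" by (simp add: sum_distrib_right)
    finally show ?thesis .
  qed
  have pw: "a i j * (z i - z j)^2 = (a i j * (z i * z i) + a i j * (z j * z j)) - 2 * (a i j * (z i * z j))" for i j
    by (simp add: power2_eq_square algebra_simps)
  have "(\<Sum>i<p. \<Sum>j<p. a i j * (z i - z j)^2) =
        (\<Sum>i<p. \<Sum>j<p. a i j * (z i * z i)) + (\<Sum>i<p. \<Sum>j<p. a i j * (z j * z j))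
         - 2 * (\<Sum>i<p. \<Sum>j<p. a i j * (z i * z j))"
    unfolding pw sum_subtractf sum.distrib sum_distrib_left[symmetric] by simp
  moreover have "(\<Sum>i<p. \<Sum>j<p. a i j * (z i * z i) - a i j * (z i * z j)) =
     (\<Sum>i<p. \<Sum>j<p. a i j * (z i * z i)) - (\<Sum>i<p. \<Sum>j<p. a i j * (z i * z j))"
    unfolding sum_subtractf by simp
  ultimately show ?thesis using l s1 by simp
qed

lemma lap_quad_nonneg:
  assumes "weighted_digraph p a"
  shows "(\<Sum>i<p. \<Sum>j<p. a i j * (z i - z j)^2) \<ge> 0"
  using assms by (intro sum_nonneg) (auto simp: weighted_digraph_def)

lemma conn_tendsto:
  fixes z :: "'b \<Rightarrow> nat \<Rightarrow> real"
  assumes wd: "weighted_digraph p a" and sc: "strongly_connected p a"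
    and lim: "((\<lambda>t. \<Sum>i<p. \<Sum>j<p. a i j * (z t i - z t j)^2) \<longlongrightarrow> 0) F"
  shows "\<forall>i<p. \<forall>j<p. ((\<lambda>t. z t i - z t j) \<longlongrightarrow> 0) F"
proof -
  have term0: "((\<lambda>t. a i j * (z t i - z t j)^2) \<longlongrightarrow> 0) F" if "i < p" "j < p" for i j
  proof (rule tendsto_sandwich[OF _ _ tendsto_const lim])
    show "eventually (\<lambda>t. 0 \<le> a i j * (z t i - z t j)^2) F"
      using wd that by (auto simp: weighted_digraph_def)
    have "a i j * (z t i - z t j)^2 \<le> (\<Sum>j<p. a i j * (z t i - z t j)^2)" for t
      using wd that by (intro nonneg_sum_le) (auto simp: weighted_digraph_def)
    moreover have "(\<Sum>j<p. a i j * (z t i - z t j)^2) \<le> (\<Sum>i<p. \<Sum>j<p. a i j * (z t i - z t j)^2)" for t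
      using wd that by (intro nonneg_sum_le[where f="\<lambda>i. \<Sum>j<p. a i j * (z t i - z t j)^2"] sum_nonneg)
        (auto simp: weighted_digraph_def)
    ultimately show "eventually (\<lambda>t. a i j * (z t i - z t j)^2 \<le> (\<Sum>i<p. \<Sum>j<p. a i j * (z t i - z t j)^2)) F"
      by (intro always_eventually allI) (blast intro: order_trans)
  qed
  have edge: "((\<lambda>t. z t i - z t j) \<longlongrightarrow> 0) F" if "i < p" "j < p" "a i j > 0" for i j
  proof -
    have "((\<lambda>t. (a i j * (z t i - z t j)^2) / a i j) \<longlongrightarrow> 0 / a i j) F"
      by (intro tendsto_divide term0 that tendsto_const) (use that in auto)
    then have "((\<lambda>t. (z t i - z t j)^2) \<longlongrightarrow> 0) F" using that by simp
    then have "((\<lambda>t. sqrt ((z t i - z t j)^2)) \<longlongrightarrow> sqrt 0) F" by (rule tendsto_real_sqrt)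
    then have "((\<lambda>t. \<bar>z t i - z t j\<bar>) \<longlongrightarrow> 0) F" by simp
    then show ?thesis by (simp add: tendsto_rabs_zero_iff)
  qed
  show ?thesis
  proof (intro allI impI)
    fix i j assume ij: "i < p" "j < p"
    have "(\<lambda>u v. u < p \<and> v < p \<and> a u v > 0)\<^sup>*\<^sup>* i j" using sc ij by (simp add: strongly_connected_def)
    then show "((\<lambda>t. z t i - z t j) \<longlongrightarrow> 0) F"
    proof (induction rule: rtranclp_induct)
      case base then show ?case by simp
    next
      case (step y w)
      have "((\<lambda>t. z t y - z t w) \<longlongrightarrow> 0) F" using edge step by auto
      from tendsto_add[OF step.IH this] have "((\<lambda>t. (z t i - z t y) + (z t y - z t w)) \<longlongrightarrow> 0 + 0) F" .
      then show ?case by simp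
    qed
  qed
qed

lemma mono_prod_nonneg: "mono \<phi> \<Longrightarrow> (u - v) * (\<phi> u - \<phi> (v::real)) \<ge> (0::real)"
proof (cases "u \<le> v")
  case True
  assume m: "mono \<phi>"
  then have "\<phi> u \<le> \<phi> v" using True by (simp add: monoD)
  then show ?thesis using True by (simp add: mult_nonpos_nonpos)
next
  case False
  assume m: "mono \<phi>"
  then have "\<phi> v \<le> \<phi> u" using False by (simp add: monoD)
  then show ?thesis using False by simp
qed

lemma mono_prod_tendsto:
  assumes m: "mono \<gamma>" and cont: "continuous_on UNIV \<gamma>" and bz: "bnd z"
    and lim: "((\<lambda>t. (z t - z0) * (\<gamma> (z t) - \<gamma> z0)) \<longlongrightarrow> 0) at_top"
  shows "((\<lambda>t. \<gamma> (z t) - \<gamma> z0) \<longlongrightarrow> 0) at_top"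
proof -
  obtain M0 where M0: "M0 > 0" "\<forall>t\<ge>0. \<bar>z t\<bar> \<le> M0" using bnd_bound[OF bz] by blast
  define M where "M = M0 + \<bar>z0\<bar>"
  have M: "\<forall>t\<ge>0. z t \<in> {-M..M}" "z0 \<in> {-M..M}" using M0 by (auto simp: M_def abs_le_iff)
  have uc: "uniformly_continuous_on {-M..M} \<gamma>"
    by (rule compact_uniformly_continuous) (auto intro: continuous_on_subset[OF cont])
  show ?thesis unfolding tendsto_iff
  proof (intro allI impI)
    fix \<epsilon> :: real assume e: "\<epsilon> > 0"
    obtain d where d: "d > 0" "\<forall>x\<in>{-M..M}. \<forall>x'\<in>{-M..M}. dist x' x < d \<longrightarrow> dist (\<gamma> x') (\<gamma> x) < \<epsilon>"
      using uc e unfolding uniformly_continuous_on_def by blast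
    have "d * \<epsilon> > 0" using d e by simp
    then have "eventually (\<lambda>t. dist ((z t - z0) * (\<gamma> (z t) - \<gamma> z0)) 0 < d * \<epsilon>) at_top"
      using lim unfolding tendsto_iff by blast
    moreover have "eventually (\<lambda>t::real. t \<ge> 0) at_top" by (rule eventually_ge_at_top)
    ultimately show "eventually (\<lambda>t. dist (\<gamma> (z t) - \<gamma> z0) 0 < \<epsilon>) at_top"
    proof eventually_elim
      case (elim t)
      show ?case
      proof (rule ccontr)
        assume "\<not> ?case"
        then have ge: "\<bar>\<gamma> (z t) - \<gamma> z0\<bar> \<ge> \<epsilon>" by (simp add: dist_real_def)
        have "\<not> dist (z t) z0 < d"
        proof
          assume "dist (z t) z0 < d"
          then have "dist (\<gamma> (z t)) (\<gamma> z0) < \<epsilon>" using d(2) M elim(2) by blast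
          then show False using ge by (simp add: dist_real_def)
        qed
        then have "\<bar>z t - z0\<bar> \<ge> d" by (simp add: dist_real_def)
        then have "\<bar>z t - z0\<bar> * \<bar>\<gamma> (z t) - \<gamma> z0\<bar> \<ge> d * \<epsilon>"
          using ge d e by (intro mult_mono) auto
        then show False using elim(1) by (simp add: dist_real_def abs_mult)
      qed
    qed
  qed
qed

lemma deriv_tendsto0_sv:
  assumes der: "\<forall>t\<ge>0. (u has_real_derivative u' t) (at t within {0..})"
    and lim: "(u' \<longlongrightarrow> 0) at_top"
  shows "sv u"
  unfolding sv_def
proof (intro allI impI)
  fix \<epsilon>::real assume e: "\<epsilon>>0"
  obtain T where T: "\<forall>t\<ge>T. \<bar>u' t\<bar> < \<epsilon>"
    using lim e unfolding tendsto_iff eventually_at_top_linorder by (auto simp: dist_real_def)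
  show "\<exists>T. \<forall>t\<ge>T. \<forall>\<tau>. 0 \<le> \<tau> \<and> \<tau> \<le> 1 \<longrightarrow> \<bar>u (t+\<tau>) - u t\<bar> < \<epsilon>"
  proof (intro exI[of _ "max T 0"] allI impI)
    fix t \<tau> :: real assume tt: "max T 0 \<le> t" "0 \<le> \<tau> \<and> \<tau> \<le> 1"
    show "\<bar>u (t+\<tau>) - u t\<bar> < \<epsilon>"
    proof (cases "\<tau> = 0")
      case False
      then obtain \<xi> where xi: "t < \<xi>" "\<xi> < t + \<tau>" "u (t+\<tau>) - u t = u' \<xi> * \<tau>"
        using mvt_within[OF der, of t "t+\<tau>"] tt by auto
      have "\<bar>u' \<xi>\<bar> < \<epsilon>" using T xi tt by auto
      then have "\<bar>u' \<xi>\<bar> * \<tau> \<le> \<epsilon> * 1" using tt by (intro mult_mono) auto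
      moreover have "\<bar>u' \<xi>\<bar> * \<tau> < \<epsilon>" 
      proof -
        have "\<bar>u' \<xi>\<bar> * \<tau> \<le> \<bar>u' \<xi>\<bar> * 1" using tt by (intro mult_left_mono) auto
        then show ?thesis using \<open>\<bar>u' \<xi>\<bar> < \<epsilon>\<close> by linarith
      qed
      then show ?thesis using xi tt by (simp add: abs_mult)
    qed (use e in simp)
  qed
qed

lemma C1_cont: "C1 \<phi> \<Longrightarrow> continuous_on UNIV \<phi>"
  unfolding C1_def by (meson continuous_at_imp_continuous_on differentiable_imp_continuous_within)

lemma sum_if_lt: fixes p n :: nat shows "p \<le> n \<Longrightarrow> (\<Sum>i<n. (if i < p then F i else (0::real))) = (\<Sum>i<p. F i)"
proof -
  assume "p \<le> n"
  then have u: "{..<n} = {..<p} \<union> {p..<n}" by auto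
  have "(\<Sum>i\<in>{..<p} \<union> {p..<n}. (if i < p then F i else (0::real)))
      = (\<Sum>i<p. (if i < p then F i else (0::real))) + (\<Sum>i\<in>{p..<n}. (if i < p then F i else (0::real)))"
    by (rule sum.union_disjoint) auto
  also have "\<dots> = (\<Sum>i<p. F i)" by simp
  finally show ?thesis using u by simp
qed

locale sys =
  fixes n m p l pc :: nat
    and e ec :: "nat \<Rightarrow> nat \<times> nat"
    and Tx Tmu Ttheta Tphi :: "nat \<Rightarrow> real"
    and d ybar xbar q r :: "nat \<Rightarrow> real"
    and h f g gam eta :: "nat \<Rightarrow> real \<Rightarrow> real"
    and a :: "nat \<Rightarrow> nat \<Rightarrow> real"
    and c :: "nat \<Rightarrow> nat"
    and mubar thetabar phibar :: "nat \<Rightarrow> real"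
    and x mu theta phi :: "real \<Rightarrow> nat \<Rightarrow> real"
    and B E Bc Ec Lcom Qm :: "nat \<Rightarrow> nat \<Rightarrow> real"
    and Psi :: "(nat \<Rightarrow> real) \<Rightarrow> nat \<Rightarrow> real"
    and dhat kappa uhat :: "nat \<Rightarrow> real"
  assumes B_def: "B = incidence m e"
    and E_def: "E = (\<lambda>i j. if i = j \<and> j < p then 1 else 0)"
    and Bc_def: "Bc = incidence l ec"
    and Ec_def: "Ec = (\<lambda>i k. if k < pc \<and> i = c k then 1 else 0)"
    and Lcom_def: "Lcom = laplacian p a"
    and Qm_def: "Qm = (\<lambda>i j. if i = j then q i else 0)"
    and Psi_def: "Psi = (\<lambda>xv. \<lambda>i.
            - mv Bc l (\<lambda>k. gam k (mv (tr Bc) n (\<lambda>j. h j (xv j)) k)) i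
            - mv Ec pc (\<lambda>k. eta (c k) (mv (tr Ec) n (\<lambda>j. h j (xv j)) k)) i)"
    and dhat_def: "dhat = (\<lambda>i. d i + mv Ec pc (\<lambda>k. eta (c k) (mv (tr Ec) n (\<lambda>j. h j (xbar j)) k)) i)"
    and kappa_def: "kappa = mv (tr E) n (\<lambda>j. (\<Sum>k<n. dhat k + mv E p (\<lambda>i. r i / q i) k)
                                    / (\<Sum>i<p. 1 / q i))"
    and uhat_def: "uhat = (\<lambda>i. (kappa i - r i) / q i)"
    and graph: "simple_graph n m e"
    and p_pos: "1 \<le> p" and p_le: "p \<le> n"
    and Ve_zf: "zero_forcing_set n m e {..<p}"
    and T_pos: "\<forall>i<n. Tx i > 0" "\<forall>k<m. Tmu k > 0" "\<forall>i<p. Ttheta i > 0" "\<forall>i<p. Tphi i > 0"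
    and h_prop: "\<forall>i<n. continuous_on UNIV (h i) \<and> strict_mono (h i)"
    and xbar_def: "\<forall>i<n. h i (xbar i) = ybar i"
    and q_pos: "\<forall>i<p. q i > 0"
    and com_graph: "weighted_digraph p a" "balanced p a" "strongly_connected p a"
    and Bc_graph: "simple_graph n l ec"
    and c_nodes: "\<forall>k<pc. c k < n"
    and gam_prop: "\<forall>k<l. continuous_on UNIV (gam k) \<and> mono (gam k)"
    and eta_prop: "\<forall>j<pc. continuous_on UNIV (eta (c j)) \<and> mono (eta (c j))"
    and f_prop: "\<forall>k<m. continuous_on UNIV (f k) \<and> strict_mono (f k)"
    and g_prop: "\<forall>i<p. continuous_on UNIV (g i) \<and> strict_mono (g i)"
    and equilibrium:
      "\<forall>i<n. Psi xbar i - mv B m (\<lambda>k. f k (mubar k)) i + mv E p (\<lambda>k. g k (thetabar k)) i - d i = 0"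
      "\<forall>k<m. mv (tr B) n (\<lambda>i. h i (xbar i) - ybar i) k = 0"
      "\<forall>i<p. - mv (tr E) n (\<lambda>j. h j (xbar j) - ybar j) i - (g i (thetabar i) - phibar i) = 0"
      "\<forall>i<p. g i (thetabar i) - phibar i
               - mv Qm p (mv Lcom p (\<lambda>j. mv Qm p phibar j + r j)) i = 0"
    and sol_x: "\<forall>t\<ge>0. \<forall>i<n. ((\<lambda>s. x s i) has_real_derivative
        ((Psi (x t) i - mv B m (\<lambda>k. f k (mu t k)) i + mv E p (\<lambda>k. g k (theta t k)) i - d i)
          / Tx i)) (at t within {0..})"
    and sol_mu: "\<forall>t\<ge>0. \<forall>k<m. ((\<lambda>s. mu s k) has_real_derivative
        (mv (tr B) n (\<lambda>i. h i (x t i) - ybar i) k / Tmu k)) (at t within {0..})"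
    and sol_theta: "\<forall>t\<ge>0. \<forall>i<p. ((\<lambda>s. theta s i) has_real_derivative
        ((- mv (tr E) n (\<lambda>j. h j (x t j) - ybar j) i - (g i (theta t i) - phi t i))
          / Ttheta i)) (at t within {0..})"
    and sol_phi: "\<forall>t\<ge>0. \<forall>i<p. ((\<lambda>s. phi s i) has_real_derivative
        ((g i (theta t i) - phi t i - mv Qm p (mv Lcom p (\<lambda>j. mv Qm p (phi t) j + r j)) i)
          / Tphi i)) (at t within {0..})"
begin

definition "XE t i = Psi (x t) i - mv B m (\<lambda>k. f k (mu t k)) i + mv E p (\<lambda>k. g k (theta t k)) i - d i"
definition "ME t k = mv (tr B) n (\<lambda>i. h i (x t i) - ybar i) k"
definition "TE t i = - mv (tr E) n (\<lambda>j. h j (x t j) - ybar j) i - (g i (theta t i) - phi t i)"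
definition "PE t i = g i (theta t i) - phi t i - mv Qm p (mv Lcom p (\<lambda>j. mv Qm p (phi t) j + r j)) i"
definition "Hx t i = h i (x t i) - h i (xbar i)"
definition "Ff mb t k = f k (mu t k) - f k (mb k)"
definition "G t i = g i (theta t i) - g i (thetabar i)"
definition "Phd t i = phi t i - phibar i"
definition "zz t = mv Qm p (Phd t)"
definition "D t i = Psi (x t) i - Psi xbar i"
definition "W1 t = (\<Sum>k<l. mv (tr Bc) n (Hx t) k *
      (gam k (mv (tr Bc) n (\<lambda>j. h j (x t j)) k) - gam k (mv (tr Bc) n (\<lambda>j. h j (xbar j)) k)))
   + (\<Sum>k<pc. Hx t (c k) * (eta (c k) (h (c k) (x t (c k))) - eta (c k) (h (c k) (xbar (c k)))))"
definition "W2 t = (\<Sum>i<p. (G t i - Phd t i)^2)"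
definition "W3 t = (\<Sum>i<p. zz t i * mv Lcom p (zz t) i)"
definition "V mb t = (\<Sum>i<n. Tx i * prim (h i) (xbar i) (x t i)) + (\<Sum>k<m. Tmu k * prim (f k) (mb k) (mu t k))
   + (\<Sum>i<p. Ttheta i * prim (g i) (thetabar i) (theta t i)) + (\<Sum>i<p. Tphi i * (phi t i - phibar i)^2 / 2)"

lemma E_mv: "mv E p v i = (if i < p then v i else 0)"
proof -
  have "mv E p v i = (\<Sum>j<p. if j = i then v j else 0)"
    unfolding mv_def E_def by (intro sum.cong refl) auto
  then show ?thesis by simp
qed

lemma trE_mv: "mv (tr E) n v i = (if i < p then v i else 0)"
proof -
  have "mv (tr E) n v i = (\<Sum>j<n. if j = i then (if i < p then v j else 0) else 0)"
    unfolding mv_def tr_def E_def by (intro sum.cong refl) auto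
  also have "\<dots> = (if i < p then v i else 0)" using p_le by auto
  finally show ?thesis .
qed

lemma Q_mv: "mv Qm p v i = (if i < p then q i * v i else 0)"
proof -
  have "mv Qm p v i = (\<Sum>j<p. if j = i then q i * v j else 0)"
    unfolding mv_def Qm_def by (intro sum.cong refl) auto
  then show ?thesis by simp
qed

lemma Ec_tr: "k < pc \<Longrightarrow> mv (tr Ec) n w k = w (c k)"
proof -
  assume k: "k < pc"
  have "mv (tr Ec) n w k = (\<Sum>j<n. if j = c k then w j else 0)"
    unfolding mv_def tr_def Ec_def using k by (intro sum.cong refl) auto
  also have "\<dots> = w (c k)" using c_nodes k by auto
  finally show ?thesis .
qed

lemma Ec_quad: "(\<Sum>i<n. H i * mv Ec pc v i) = (\<Sum>k<pc. v k * H (c k))"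
proof -
  have "(\<Sum>i<n. H i * mv Ec pc v i) = (\<Sum>k<pc. v k * mv (tr Ec) n H k)" by (rule mv_swap)
  also have "\<dots> = (\<Sum>k<pc. v k * H (c k))" by (intro sum.cong refl) (simp add: Ec_tr)
  finally show ?thesis .
qed

lemma Ec_sum: "(\<Sum>i<n. mv Ec pc v i) = (\<Sum>k<pc. v k)"
  using Ec_quad[of "\<lambda>_. 1" v] by simp

lemma hc: "i < n \<Longrightarrow> continuous_on UNIV (h i)" using h_prop by blast
lemma hm: "i < n \<Longrightarrow> strict_mono (h i)" using h_prop by blast
lemma fc: "k < m \<Longrightarrow> continuous_on UNIV (f k)" using f_prop by blast
lemma fm: "k < m \<Longrightarrow> strict_mono (f k)" using f_prop by blast
lemma gc: "i < p \<Longrightarrow> continuous_on UNIV (g i)" using g_prop by blast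
lemma gm: "i < p \<Longrightarrow> strict_mono (g i)" using g_prop by blast
lemma gamc: "k < l \<Longrightarrow> continuous_on UNIV (gam k)" using gam_prop by blast
lemma gamm: "k < l \<Longrightarrow> mono (gam k)" using gam_prop by blast
lemma etac: "k < pc \<Longrightarrow> continuous_on UNIV (eta (c k))" using eta_prop by blast
lemma etam: "k < pc \<Longrightarrow> mono (eta (c k))" using eta_prop by blast

lemma phibar_eq: "i < p \<Longrightarrow> phibar i = g i (thetabar i)"
proof -
  assume i: "i < p"
  have "mv (tr E) n (\<lambda>j. h j (xbar j) - ybar j) i = 0"
    unfolding trE_mv using i p_le xbar_def by auto
  then show ?thesis using equilibrium(3) i by auto
qed

lemma ME_eq: "k < m \<Longrightarrow> ME t k = mv (tr B) n (Hx t) k"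
  unfolding ME_def Hx_def using xbar_def by (intro mv_cong) auto

lemma TE_eq: "i < p \<Longrightarrow> TE t i = - Hx t i - (G t i - Phd t i)"
  unfolding TE_def trE_mv Hx_def G_def Phd_def using xbar_def p_le phibar_eq by auto

lemma PE_eq: "i < p \<Longrightarrow> PE t i = G t i - Phd t i - mv Qm p (mv Lcom p (zz t)) i"
proof -
  assume i: "i < p"
  have eq4: "g i (thetabar i) - phibar i - mv Qm p (mv Lcom p (\<lambda>j. mv Qm p phibar j + r j)) i = 0"
    using equilibrium(4) i by blast
  have lin: "mv Lcom p (\<lambda>j. mv Qm p (phi t) j + r j) k - mv Lcom p (\<lambda>j. mv Qm p phibar j + r j) k
        = mv Lcom p (zz t) k" for k
    unfolding mv_diff zz_def Phd_def by (intro mv_cong) (simp add: mv_diff)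
  have "mv Qm p (mv Lcom p (\<lambda>j. mv Qm p (phi t) j + r j)) i - mv Qm p (mv Lcom p (\<lambda>j. mv Qm p phibar j + r j)) i
        = mv Qm p (\<lambda>k. mv Lcom p (\<lambda>j. mv Qm p (phi t) j + r j) k - mv Lcom p (\<lambda>j. mv Qm p phibar j + r j) k) i"
    by (rule mv_diff)
  also have "(\<lambda>k. mv Lcom p (\<lambda>j. mv Qm p (phi t) j + r j) k - mv Lcom p (\<lambda>j. mv Qm p phibar j + r j) k) = mv Lcom p (zz t)"
    by (rule ext) (rule lin)
  finally have "mv Qm p (mv Lcom p (\<lambda>j. mv Qm p (phi t) j + r j)) i - mv Qm p (mv Lcom p (\<lambda>j. mv Qm p phibar j + r j)) i
        = mv Qm p (mv Lcom p (zz t)) i" .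
  then show ?thesis using eq4 unfolding PE_def G_def Phd_def by simp
qed

lemma XE_eq:
  assumes eq1: "\<forall>i<n. Psi xbar i - mv B m (\<lambda>k. f k (mb k)) i + mv E p (\<lambda>k. g k (thetabar k)) i - d i = 0"
  shows "i < n \<Longrightarrow> XE t i = D t i - mv B m (Ff mb t) i + mv E p (G t) i"
proof -
  assume i: "i < n"
  have e: "Psi xbar i - mv B m (\<lambda>k. f k (mb k)) i + mv E p (\<lambda>k. g k (thetabar k)) i - d i = 0"
    using eq1 i by blast
  have "mv B m (\<lambda>k. f k (mu t k)) i - mv B m (\<lambda>k. f k (mb k)) i = mv B m (Ff mb t) i"
    unfolding mv_diff Ff_def ..
  moreover have "mv E p (\<lambda>k. g k (theta t k)) i - mv E p (\<lambda>k. g k (thetabar k)) i = mv E p (G t) i"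
    unfolding mv_diff G_def ..
  ultimately show ?thesis using e unfolding XE_def D_def by linarith
qed

lemma D_eq: "i < n \<Longrightarrow> D t i = - mv Bc l (\<lambda>k. gam k (mv (tr Bc) n (\<lambda>j. h j (x t j)) k) - gam k (mv (tr Bc) n (\<lambda>j. h j (xbar j)) k)) i
     - mv Ec pc (\<lambda>k. eta (c k) (mv (tr Ec) n (\<lambda>j. h j (x t j)) k) - eta (c k) (mv (tr Ec) n (\<lambda>j. h j (xbar j)) k)) i"
  unfolding D_def by (simp add: Psi_def mv_diff[symmetric])

lemma HD_eq: "(\<Sum>i<n. Hx t i * D t i) = - W1 t"
proof -
  define GA where "GA = (\<lambda>k. gam k (mv (tr Bc) n (\<lambda>j. h j (x t j)) k) - gam k (mv (tr Bc) n (\<lambda>j. h j (xbar j)) k))"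
  define EA where "EA = (\<lambda>k. eta (c k) (mv (tr Ec) n (\<lambda>j. h j (x t j)) k) - eta (c k) (mv (tr Ec) n (\<lambda>j. h j (xbar j)) k))"
  have "(\<Sum>i<n. Hx t i * D t i) = (\<Sum>i<n. - (Hx t i * mv Bc l GA i) - Hx t i * mv Ec pc EA i)"
    by (intro sum.cong refl) (simp add: D_eq GA_def EA_def right_diff_distrib)
  also have "\<dots> = - (\<Sum>i<n. Hx t i * mv Bc l GA i) - (\<Sum>i<n. Hx t i * mv Ec pc EA i)"
    by (simp add: sum_subtractf sum_negf)
  also have "(\<Sum>i<n. Hx t i * mv Bc l GA i) = (\<Sum>k<l. GA k * mv (tr Bc) n (Hx t) k)"
    by (rule mv_swap)
  also have "(\<Sum>i<n. Hx t i * mv Ec pc EA i) = (\<Sum>k<pc. EA k * Hx t (c k))"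
    by (rule Ec_quad)
  also have "(\<Sum>k<l. GA k * mv (tr Bc) n (Hx t) k) = (\<Sum>k<l. mv (tr Bc) n (Hx t) k *
      (gam k (mv (tr Bc) n (\<lambda>j. h j (x t j)) k) - gam k (mv (tr Bc) n (\<lambda>j. h j (xbar j)) k)))"
    unfolding GA_def by (simp add: mult.commute)
  also have "(\<Sum>k<pc. EA k * Hx t (c k)) =
      (\<Sum>k<pc. Hx t (c k) * (eta (c k) (h (c k) (x t (c k))) - eta (c k) (h (c k) (xbar (c k)))))"
    unfolding EA_def by (intro sum.cong refl) (simp add: Ec_tr mult.commute)
  finally show ?thesis unfolding W1_def by simp
qed

lemma lyap_identity:
  assumes eq1: "\<forall>i<n. Psi xbar i - mv B m (\<lambda>k. f k (mb k)) i + mv E p (\<lambda>k. g k (thetabar k)) i - d i = 0"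
  shows "(\<Sum>i<n. Hx t i * XE t i) + (\<Sum>k<m. Ff mb t k * ME t k) + (\<Sum>i<p. G t i * TE t i)
         + (\<Sum>i<p. Phd t i * PE t i) = - (W1 t + W2 t + W3 t)"
proof -
  have s1a: "(\<Sum>i<n. Hx t i * XE t i) = (\<Sum>i<n. Hx t i * D t i - Hx t i * mv B m (Ff mb t) i
        + Hx t i * mv E p (G t) i)"
    by (intro sum.cong refl) (simp add: XE_eq[OF eq1] right_diff_distrib distrib_left)
  have s1b: "(\<Sum>i<n. Hx t i * D t i - Hx t i * mv B m (Ff mb t) i + Hx t i * mv E p (G t) i)
       = (\<Sum>i<n. Hx t i * D t i) - (\<Sum>i<n. Hx t i * mv B m (Ff mb t) i) + (\<Sum>i<n. Hx t i * mv E p (G t) i)"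
    by (simp add: sum.distrib sum_subtractf)
  have s1c: "(\<Sum>i<n. Hx t i * mv E p (G t) i) = (\<Sum>i<p. Hx t i * G t i)"
  proof -
    have "(\<Sum>i<n. Hx t i * mv E p (G t) i) = (\<Sum>i<n. (if i < p then Hx t i * G t i else 0))"
      by (intro sum.cong refl) (simp add: E_mv)
    then show ?thesis using sum_if_lt[OF p_le] by simp
  qed
  have s2: "(\<Sum>k<m. Ff mb t k * ME t k) = (\<Sum>i<n. Hx t i * mv B m (Ff mb t) i)"
  proof -
    have "(\<Sum>i<n. Hx t i * mv B m (Ff mb t) i) = (\<Sum>k<m. Ff mb t k * mv (tr B) n (Hx t) k)" by (rule mv_swap)
    also have "\<dots> = (\<Sum>k<m. Ff mb t k * ME t k)" by (intro sum.cong refl) (simp add: ME_eq)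
    finally show ?thesis by simp
  qed
  have s3: "(\<Sum>i<p. G t i * TE t i) = (\<Sum>i<p. - (G t i * Hx t i) - G t i * (G t i - Phd t i))"
    by (intro sum.cong refl) (simp add: TE_eq right_diff_distrib)
  have s4a: "(\<Sum>i<p. Phd t i * PE t i) = (\<Sum>i<p. Phd t i * (G t i - Phd t i) - Phd t i * mv Qm p (mv Lcom p (zz t)) i)"
    by (intro sum.cong refl) (simp add: PE_eq right_diff_distrib)
  have s4a': "(\<Sum>i<p. Phd t i * (G t i - Phd t i) - Phd t i * mv Qm p (mv Lcom p (zz t)) i) =
      (\<Sum>i<p. Phd t i * (G t i - Phd t i)) - (\<Sum>i<p. Phd t i * mv Qm p (mv Lcom p (zz t)) i)"
    by (rule sum_subtractf)
  have s4b: "(\<Sum>i<p. Phd t i * mv Qm p (mv Lcom p (zz t)) i) = W3 t"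
    unfolding W3_def zz_def by (intro sum.cong refl) (simp add: Q_mv)
  have pw: "Hx t i * G t i + (- (G t i * Hx t i) - G t i * (G t i - Phd t i)) + Phd t i * (G t i - Phd t i)
      = - ((G t i - Phd t i)^2)" for i
    by (simp add: power2_eq_square algebra_simps)
  have s5: "(\<Sum>i<p. Hx t i * G t i) + (\<Sum>i<p. - (G t i * Hx t i) - G t i * (G t i - Phd t i))
       + (\<Sum>i<p. Phd t i * (G t i - Phd t i)) = - W2 t"
    unfolding W2_def sum.distrib[symmetric] pw sum_negf ..
  show ?thesis using s1a s1b s1c s2 s3 s4a s4a' s4b s5 HD_eq[of t] by linarith
qed

end

context sys begin

lemma Hx_tr: "mv (tr Bc) n (Hx t) k = mv (tr Bc) n (\<lambda>j. h j (x t j)) k - mv (tr Bc) n (\<lambda>j. h j (xbar j)) k"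
  unfolding Hx_def mv_diff ..

lemma W1_nonneg: "W1 t \<ge> 0"
proof -
  have a: "(\<Sum>k<l. mv (tr Bc) n (Hx t) k *
      (gam k (mv (tr Bc) n (\<lambda>j. h j (x t j)) k) - gam k (mv (tr Bc) n (\<lambda>j. h j (xbar j)) k))) \<ge> 0"
    by (intro sum_nonneg) (simp add: Hx_tr mono_prod_nonneg gamm)
  have b: "(\<Sum>k<pc. Hx t (c k) * (eta (c k) (h (c k) (x t (c k))) - eta (c k) (h (c k) (xbar (c k))))) \<ge> 0"
    by (intro sum_nonneg) (simp add: Hx_def mono_prod_nonneg etam)
  show ?thesis unfolding W1_def using a b by simp
qed

lemma W2_nonneg: "W2 t \<ge> 0"
  unfolding W2_def by (intro sum_nonneg) simp

lemma W3_quad: "W3 t = (\<Sum>i<p. \<Sum>j<p. a i j * (zz t i - zz t j)^2) / 2"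
  unfolding W3_def using lap_quad[OF com_graph(2), of "zz t"] by (simp add: Lcom_def)

lemma W3_nonneg: "W3 t \<ge> 0"
  unfolding W3_quad using lap_quad_nonneg[OF com_graph(1)] by simp

lemma half_sq_deriv: "((\<lambda>y::real. (y - b)^2 / 2) has_real_derivative (y - b)) (at y)"
  by (auto intro!: derivative_eq_intros simp: power2_eq_square)

lemma V_fun: "V mb = (\<lambda>t. (\<Sum>i<n. Tx i * prim (h i) (xbar i) (x t i)) + (\<Sum>k<m. Tmu k * prim (f k) (mb k) (mu t k))
   + (\<Sum>i<p. Ttheta i * prim (g i) (thetabar i) (theta t i)) + (\<Sum>i<p. Tphi i * ((phi t i - phibar i)^2 / 2)))"
  by (rule ext) (simp add: V_def)

lemma V_deriv:
  assumes eq1: "\<forall>i<n. Psi xbar i - mv B m (\<lambda>k. f k (mb k)) i + mv E p (\<lambda>k. g k (thetabar k)) i - d i = 0"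
    and t: "t \<ge> 0"
  shows "(V mb has_real_derivative - (W1 t + W2 t + W3 t)) (at t within {0..})"
proof -
  have dx: "((\<lambda>s. Tx i * prim (h i) (xbar i) (x s i)) has_real_derivative Hx t i * XE t i) (at t within {0..})"
    if i: "i < n" for i
  proof -
    have "((\<lambda>s. x s i) has_real_derivative XE t i / Tx i) (at t within {0..})"
      using sol_x t i unfolding XE_def by blast
    from DERIV_chain'[OF this prim_deriv[OF hc[OF i]]]
    have "((\<lambda>s. prim (h i) (xbar i) (x s i)) has_real_derivative Hx t i * (XE t i / Tx i)) (at t within {0..})"
      unfolding Hx_def .
    from DERIV_cmult[OF this, of "Tx i"] show ?thesis using T_pos(1)[rule_format, OF i, THEN less_imp_neq, THEN not_sym] by simp
  qed
  have dmu: "((\<lambda>s. Tmu k * prim (f k) (mb k) (mu s k)) has_real_derivative Ff mb t k * ME t k) (at t within {0..})"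
    if k: "k < m" for k
  proof -
    have "((\<lambda>s. mu s k) has_real_derivative ME t k / Tmu k) (at t within {0..})"
      using sol_mu t k unfolding ME_def by blast
    from DERIV_chain'[OF this prim_deriv[OF fc[OF k]]]
    have "((\<lambda>s. prim (f k) (mb k) (mu s k)) has_real_derivative Ff mb t k * (ME t k / Tmu k)) (at t within {0..})"
      unfolding Ff_def .
    from DERIV_cmult[OF this, of "Tmu k"] show ?thesis using T_pos(2)[rule_format, OF k, THEN less_imp_neq, THEN not_sym] by simp
  qed
  have dth: "((\<lambda>s. Ttheta i * prim (g i) (thetabar i) (theta s i)) has_real_derivative G t i * TE t i) (at t within {0..})"
    if i: "i < p" for i
  proof -
    have "((\<lambda>s. theta s i) has_real_derivative TE t i / Ttheta i) (at t within {0..})"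
      using sol_theta t i unfolding TE_def by blast
    from DERIV_chain'[OF this prim_deriv[OF gc[OF i]]]
    have "((\<lambda>s. prim (g i) (thetabar i) (theta s i)) has_real_derivative G t i * (TE t i / Ttheta i)) (at t within {0..})"
      unfolding G_def .
    from DERIV_cmult[OF this, of "Ttheta i"] show ?thesis using T_pos(3)[rule_format, OF i, THEN less_imp_neq, THEN not_sym] by simp
  qed
  have dph: "((\<lambda>s. Tphi i * ((phi s i - phibar i)^2 / 2)) has_real_derivative Phd t i * PE t i) (at t within {0..})"
    if i: "i < p" for i
  proof -
    have "((\<lambda>s. phi s i) has_real_derivative PE t i / Tphi i) (at t within {0..})"
      using sol_phi t i unfolding PE_def by blast
    from DERIV_chain'[OF this half_sq_deriv]
    have "((\<lambda>s. (phi s i - phibar i)^2 / 2) has_real_derivative Phd t i * (PE t i / Tphi i)) (at t within {0..})"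
      unfolding Phd_def .
    from DERIV_cmult[OF this, of "Tphi i"] show ?thesis using T_pos(4)[rule_format, OF i, THEN less_imp_neq, THEN not_sym] by simp
  qed
  have "(V mb has_real_derivative (\<Sum>i<n. Hx t i * XE t i) + (\<Sum>k<m. Ff mb t k * ME t k) + (\<Sum>i<p. G t i * TE t i)
         + (\<Sum>i<p. Phd t i * PE t i)) (at t within {0..})"
    unfolding V_fun
    by (intro DERIV_add DERIV_sum dx dmu dth dph) auto
  then show ?thesis unfolding lyap_identity[OF eq1] .
qed

lemma eq1_mubar: "\<forall>i<n. Psi xbar i - mv B m (\<lambda>k. f k (mubar k)) i + mv E p (\<lambda>k. g k (thetabar k)) i - d i = 0"
  using equilibrium(1) .

lemma V_terms_nonneg:
  shows "\<forall>i<n. Tx i * prim (h i) (xbar i) (x t i) \<ge> 0"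
    and "\<forall>k<m. Tmu k * prim (f k) (mb k) (mu t k) \<ge> 0"
    and "\<forall>i<p. Ttheta i * prim (g i) (thetabar i) (theta t i) \<ge> 0"
    and "\<forall>i<p. Tphi i * ((phi t i - phibar i)^2 / 2) \<ge> 0"
  using T_pos prim_nonneg[OF hc strict_mono_mono[OF hm]] prim_nonneg[OF fc strict_mono_mono[OF fm]]
    prim_nonneg[OF gc strict_mono_mono[OF gm]] by (auto intro!: mult_nonneg_nonneg simp: less_imp_le)

lemma V_nonneg: "V mb t \<ge> 0"
  unfolding V_def using V_terms_nonneg[where t=t]
  by (intro add_nonneg_nonneg sum_nonneg) auto

lemma V_antimono:
  assumes eq1: "\<forall>i<n. Psi xbar i - mv B m (\<lambda>k. f k (mb k)) i + mv E p (\<lambda>k. g k (thetabar k)) i - d i = 0"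
  shows "\<forall>s t. 0 \<le> s \<longrightarrow> s \<le> t \<longrightarrow> V mb t \<le> V mb s"
proof (rule deriv_nonpos_antimono)
  show "\<forall>t\<ge>0. (V mb has_real_derivative - (W1 t + W2 t + W3 t)) (at t within {0..})"
    using V_deriv[OF eq1] by blast
  show "\<forall>t\<ge>0. - (W1 t + W2 t + W3 t) \<le> 0"
    using W1_nonneg W2_nonneg W3_nonneg by (metis add_nonneg_nonneg neg_le_0_iff_le)
qed

lemma V_term_le:
  shows "i < n \<Longrightarrow> Tx i * prim (h i) (xbar i) (x t i) \<le> V mb t"
    and "k < m \<Longrightarrow> Tmu k * prim (f k) (mb k) (mu t k) \<le> V mb t"
    and "i < p \<Longrightarrow> Ttheta i * prim (g i) (thetabar i) (theta t i) \<le> V mb t"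
    and "i < p \<Longrightarrow> Tphi i * ((phi t i - phibar i)^2 / 2) \<le> V mb t"
proof -
  note nn = V_terms_nonneg[where t=t]
  have s1: "(\<Sum>i<n. Tx i * prim (h i) (xbar i) (x t i)) \<ge> 0" using nn(1) by (intro sum_nonneg) auto
  have s2: "(\<Sum>k<m. Tmu k * prim (f k) (mb k) (mu t k)) \<ge> 0" using nn(2) by (intro sum_nonneg) auto
  have s3: "(\<Sum>i<p. Ttheta i * prim (g i) (thetabar i) (theta t i)) \<ge> 0" using nn(3) by (intro sum_nonneg) auto
  have s4: "(\<Sum>i<p. Tphi i * ((phi t i - phibar i)^2 / 2)) \<ge> 0" using nn(4) by (intro sum_nonneg) auto
  have V: "V mb t = (\<Sum>i<n. Tx i * prim (h i) (xbar i) (x t i)) + (\<Sum>k<m. Tmu k * prim (f k) (mb k) (mu t k))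
   + (\<Sum>i<p. Ttheta i * prim (g i) (thetabar i) (theta t i)) + (\<Sum>i<p. Tphi i * ((phi t i - phibar i)^2 / 2))"
    by (simp add: V_def)
  show "i < n \<Longrightarrow> Tx i * prim (h i) (xbar i) (x t i) \<le> V mb t"
  proof -
    assume i: "i < n"
    have "Tx i * prim (h i) (xbar i) (x t i) \<le> (\<Sum>i<n. Tx i * prim (h i) (xbar i) (x t i))"
      using nn(1) i by (intro nonneg_sum_le) auto
    then show ?thesis using V s2 s3 s4 by linarith
  qed
  show "k < m \<Longrightarrow> Tmu k * prim (f k) (mb k) (mu t k) \<le> V mb t"
  proof -
    assume k: "k < m"
    have "Tmu k * prim (f k) (mb k) (mu t k) \<le> (\<Sum>k<m. Tmu k * prim (f k) (mb k) (mu t k))"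
      using nn(2) k by (intro nonneg_sum_le) auto
    then show ?thesis using V s1 s3 s4 by linarith
  qed
  show "i < p \<Longrightarrow> Ttheta i * prim (g i) (thetabar i) (theta t i) \<le> V mb t"
  proof -
    assume i: "i < p"
    have "Ttheta i * prim (g i) (thetabar i) (theta t i) \<le> (\<Sum>i<p. Ttheta i * prim (g i) (thetabar i) (theta t i))"
      using nn(3) i by (intro nonneg_sum_le) auto
    then show ?thesis using V s1 s2 s4 by linarith
  qed
  show "i < p \<Longrightarrow> Tphi i * ((phi t i - phibar i)^2 / 2) \<le> V mb t"
  proof -
    assume i: "i < p"
    have "Tphi i * ((phi t i - phibar i)^2 / 2) \<le> (\<Sum>i<p. Tphi i * ((phi t i - phibar i)^2 / 2))"
      using nn(4) i by (intro nonneg_sum_le) auto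
    then show ?thesis using V s1 s2 s3 by linarith
  qed
qed

definition "V0 = V mubar 0"

lemma V_le_V0: "t \<ge> 0 \<Longrightarrow> V mubar t \<le> V0"
  using V_antimono[OF eq1_mubar] unfolding V0_def by auto

lemma bnd_x: "i < n \<Longrightarrow> bnd (\<lambda>t. x t i)"
proof -
  assume i: "i < n"
  obtain M where M: "\<forall>s. prim (h i) (xbar i) s \<le> V0 / Tx i \<longrightarrow> \<bar>s\<bar> \<le> M"
    using prim_bounded[OF hc[OF i] hm[OF i]] by blast
  have "\<forall>t\<ge>0. \<bar>x t i\<bar> \<le> M"
  proof (intro allI impI)
    fix t :: real assume t: "t \<ge> 0"
    have "Tx i * prim (h i) (xbar i) (x t i) \<le> V0" using V_term_le(1)[OF i, where t=t and mb=mubar] V_le_V0[OF t] by linarith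
    then have "prim (h i) (xbar i) (x t i) \<le> V0 / Tx i" using T_pos(1) i by (simp add: field_simps)
    then show "\<bar>x t i\<bar> \<le> M" using M by blast
  qed
  then show ?thesis unfolding bnd_def by blast
qed

lemma bnd_mu: "k < m \<Longrightarrow> bnd (\<lambda>t. mu t k)"
proof -
  assume k: "k < m"
  obtain M where M: "\<forall>s. prim (f k) (mubar k) s \<le> V0 / Tmu k \<longrightarrow> \<bar>s\<bar> \<le> M"
    using prim_bounded[OF fc[OF k] fm[OF k]] by blast
  have "\<forall>t\<ge>0. \<bar>mu t k\<bar> \<le> M"
  proof (intro allI impI)
    fix t :: real assume t: "t \<ge> 0"
    have "Tmu k * prim (f k) (mubar k) (mu t k) \<le> V0" using V_term_le(2)[OF k, where t=t and mb=mubar] V_le_V0[OF t] by linarith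
    then have "prim (f k) (mubar k) (mu t k) \<le> V0 / Tmu k" using T_pos(2) k by (simp add: field_simps)
    then show "\<bar>mu t k\<bar> \<le> M" using M by blast
  qed
  then show ?thesis unfolding bnd_def by blast
qed

lemma bnd_theta: "i < p \<Longrightarrow> bnd (\<lambda>t. theta t i)"
proof -
  assume i: "i < p"
  obtain M where M: "\<forall>s. prim (g i) (thetabar i) s \<le> V0 / Ttheta i \<longrightarrow> \<bar>s\<bar> \<le> M"
    using prim_bounded[OF gc[OF i] gm[OF i]] by blast
  have "\<forall>t\<ge>0. \<bar>theta t i\<bar> \<le> M"
  proof (intro allI impI)
    fix t :: real assume t: "t \<ge> 0"
    have "Ttheta i * prim (g i) (thetabar i) (theta t i) \<le> V0" using V_term_le(3)[OF i, where t=t and mb=mubar] V_le_V0[OF t] by linarith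
    then have "prim (g i) (thetabar i) (theta t i) \<le> V0 / Ttheta i" using T_pos(3) i by (simp add: field_simps)
    then show "\<bar>theta t i\<bar> \<le> M" using M by blast
  qed
  then show ?thesis unfolding bnd_def by blast
qed

lemma bnd_phi: "i < p \<Longrightarrow> bnd (\<lambda>t. phi t i)"
proof -
  assume i: "i < p"
  have "\<forall>t\<ge>0. \<bar>phi t i\<bar> \<le> \<bar>phibar i\<bar> + sqrt (2 * V0 / Tphi i)"
  proof (intro allI impI)
    fix t :: real assume t: "t \<ge> 0"
    have "Tphi i * ((phi t i - phibar i)^2 / 2) \<le> V0" using V_term_le(4)[OF i, where t=t and mb=mubar] V_le_V0[OF t] by linarith
    then have "(phi t i - phibar i)^2 \<le> 2 * V0 / Tphi i" using T_pos(4) i by (simp add: field_simps)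
    then have "sqrt ((phi t i - phibar i)^2) \<le> sqrt (2 * V0 / Tphi i)" by (rule real_sqrt_le_mono)
    then have "\<bar>phi t i - phibar i\<bar> \<le> sqrt (2 * V0 / Tphi i)" by simp
    then show "\<bar>phi t i\<bar> \<le> \<bar>phibar i\<bar> + sqrt (2 * V0 / Tphi i)" by linarith
  qed
  then show ?thesis unfolding bnd_def by blast
qed

end

lemma bnd_comp:
  assumes cont: "continuous_on UNIV \<phi>" and bu: "bnd u"
  shows "bnd (\<lambda>t. \<phi> (u t))"
proof -
  obtain M where M: "M > 0" "\<forall>t\<ge>0. \<bar>u t\<bar> \<le> M" using bnd_bound[OF bu] by blast
  have "compact (\<phi> ` {-M..M})"
    by (intro compact_continuous_image continuous_on_subset[OF cont]) auto
  then have "bounded (\<phi> ` {-M..M})" by (rule compact_imp_bounded)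
  then obtain K where "\<forall>z\<in>\<phi> ` {-M..M}. \<bar>z\<bar> \<le> K" unfolding bounded_real by blast
  then have K: "\<forall>y\<in>{-M..M}. \<bar>\<phi> y\<bar> \<le> K" by blast
  have "\<forall>t\<ge>0. \<bar>\<phi> (u t)\<bar> \<le> K"
  proof (intro allI impI)
    fix t :: real assume "t \<ge> 0"
    then have "u t \<in> {-M..M}" using M by (auto simp: abs_le_iff)
    then show "\<bar>\<phi> (u t)\<bar> \<le> K" using K by blast
  qed
  then show ?thesis unfolding bnd_def by blast
qed

locale good = sys +
  fixes P :: "(real \<Rightarrow> real) \<Rightarrow> bool"
  assumes Pc: "\<And>b. P (\<lambda>t. b)"
    and Padd: "\<And>u v. P u \<Longrightarrow> P v \<Longrightarrow> P (\<lambda>t. u t + v t)"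
    and Pmult: "\<And>u v. P u \<Longrightarrow> P v \<Longrightarrow> P (\<lambda>t. u t * v t)"
    and Pcomp: "\<And>\<phi> u. continuous_on UNIV \<phi> \<Longrightarrow> P u \<Longrightarrow> P (\<lambda>t. \<phi> (u t))"
    and Px: "\<forall>i<n. P (\<lambda>t. x t i)"
    and Pmu: "\<forall>k<m. P (\<lambda>t. mu t k)"
    and Pth: "\<forall>i<p. P (\<lambda>t. theta t i)"
    and Pph: "\<forall>i<p. P (\<lambda>t. phi t i)"
begin

lemma Pneg: "P u \<Longrightarrow> P (\<lambda>t. - u t)"
  using Pmult[OF Pc[of "-1"], of u] by simp
lemma Pdiff: "P u \<Longrightarrow> P v \<Longrightarrow> P (\<lambda>t. u t - v t)"
  using Padd[OF _ Pneg, of u v] by simp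
lemma Pcm: "P u \<Longrightarrow> P (\<lambda>t. b * u t)"
  using Pmult[OF Pc[of b], of u] by simp
lemma Pdivc: "P u \<Longrightarrow> P (\<lambda>t. u t / b)"
  using Pmult[OF _ Pc[of "1/b"], of u] by simp
lemma Psum: "finite A \<Longrightarrow> (\<And>i. i \<in> A \<Longrightarrow> P (F i)) \<Longrightarrow> P (\<lambda>t. \<Sum>i\<in>A. F i t)"
  by (induction A rule: finite_induct) (auto simp: Pc intro!: Padd)
lemma Pmv: "(\<And>j. j < k \<Longrightarrow> P (\<lambda>t. v t j)) \<Longrightarrow> P (\<lambda>t. mv A k (v t) i)"
  unfolding mv_def by (intro Psum Pcm) auto

lemma P_hx: "i < n \<Longrightarrow> P (\<lambda>t. h i (x t i))"
  using Pcomp[OF hc] Px by blast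
lemma P_trBc: "P (\<lambda>t. mv (tr Bc) n (\<lambda>j. h j (x t j)) k)"
  by (intro Pmv P_hx)
lemma P_trEc: "P (\<lambda>t. mv (tr Ec) n (\<lambda>j. h j (x t j)) k)"
  by (intro Pmv P_hx)
lemma P_Psi: "P (\<lambda>t. Psi (x t) i)"
proof -
  have a: "P (\<lambda>t. mv Bc l (\<lambda>k. gam k (mv (tr Bc) n (\<lambda>j. h j (x t j)) k)) i)"
    by (intro Pmv Pcomp[OF gamc P_trBc])
  have b: "P (\<lambda>t. mv Ec pc (\<lambda>k. eta (c k) (mv (tr Ec) n (\<lambda>j. h j (x t j)) k)) i)"
    by (intro Pmv Pcomp[OF etac P_trEc])
  show ?thesis using Pdiff[OF Pneg[OF a] b] by (simp add: Psi_def)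
qed
lemma P_XE: "P (\<lambda>t. XE t i)"
proof -
  have a: "P (\<lambda>t. mv B m (\<lambda>k. f k (mu t k)) i)"
    by (intro Pmv) (use Pcomp[OF fc] Pmu in blast)
  have b: "P (\<lambda>t. mv E p (\<lambda>k. g k (theta t k)) i)"
    by (intro Pmv) (use Pcomp[OF gc] Pth in blast)
  show ?thesis unfolding XE_def by (intro Pdiff Padd P_Psi a b Pc)
qed
lemma P_ME: "P (\<lambda>t. ME t k)"
  unfolding ME_def by (intro Pmv Pdiff P_hx Pc)
lemma P_TE: "i < p \<Longrightarrow> P (\<lambda>t. TE t i)"
proof -
  assume i: "i < p"
  have a: "P (\<lambda>t. mv (tr E) n (\<lambda>j. h j (x t j) - ybar j) i)" by (intro Pmv Pdiff P_hx Pc)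
  show ?thesis unfolding TE_def using i Pth Pph by (intro Pdiff Pneg a Pcomp[OF gc]) auto
qed
lemma P_PE: "i < p \<Longrightarrow> P (\<lambda>t. PE t i)"
proof -
  assume i: "i < p"
  have a: "P (\<lambda>t. mv Qm p (mv Lcom p (\<lambda>j. mv Qm p (phi t) j + r j)) i)"
    by (intro Pmv Padd Pc) (use Pph in auto)
  show ?thesis unfolding PE_def using i Pth Pph by (intro Pdiff a Pcomp[OF gc]) auto
qed
lemma P_Hx: "i < n \<Longrightarrow> P (\<lambda>t. Hx t i)"
  unfolding Hx_def by (intro Pdiff P_hx Pc)
lemma P_G: "i < p \<Longrightarrow> P (\<lambda>t. G t i)"
  unfolding G_def using Pth by (intro Pdiff Pcomp[OF gc] Pc) auto
lemma P_Phd: "i < p \<Longrightarrow> P (\<lambda>t. Phd t i)"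
  unfolding Phd_def using Pph by (intro Pdiff Pc) auto
lemma P_Ff: "k < m \<Longrightarrow> P (\<lambda>t. Ff mb t k)"
  unfolding Ff_def using Pmu by (intro Pdiff Pcomp[OF fc] Pc) auto
lemma P_zz: "P (\<lambda>t. zz t i)"
  unfolding zz_def by (intro Pmv P_Phd) auto
lemma P_D: "P (\<lambda>t. D t i)"
  unfolding D_def by (intro Pdiff P_Psi Pc)
lemma P_W1: "P W1"
proof -
  have a: "P (\<lambda>t. \<Sum>k<l. mv (tr Bc) n (Hx t) k *
      (gam k (mv (tr Bc) n (\<lambda>j. h j (x t j)) k) - gam k (mv (tr Bc) n (\<lambda>j. h j (xbar j)) k)))"
    by (intro Psum Pmult Pmv P_Hx Pdiff Pcomp[OF gamc P_trBc] Pc) auto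
  have b: "P (\<lambda>t. \<Sum>k<pc. Hx t (c k) * (eta (c k) (h (c k) (x t (c k))) - eta (c k) (h (c k) (xbar (c k)))))"
    using c_nodes by (intro Psum Pmult P_Hx Pdiff Pcomp[OF etac P_hx] Pc) auto
  have "W1 = (\<lambda>t. (\<Sum>k<l. mv (tr Bc) n (Hx t) k *
      (gam k (mv (tr Bc) n (\<lambda>j. h j (x t j)) k) - gam k (mv (tr Bc) n (\<lambda>j. h j (xbar j)) k)))
   + (\<Sum>k<pc. Hx t (c k) * (eta (c k) (h (c k) (x t (c k))) - eta (c k) (h (c k) (xbar (c k))))))"
    by (rule ext) (simp add: W1_def)
  then show ?thesis using Padd[OF a b] by simp
qed
lemma P_W2: "P W2"
proof -
  have "W2 = (\<lambda>t. \<Sum>i<p. (G t i - Phd t i) * (G t i - Phd t i))" by (rule ext) (simp add: W2_def power2_eq_square)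
  moreover have "P (\<lambda>t. \<Sum>i<p. (G t i - Phd t i) * (G t i - Phd t i))"
    by (intro Psum Pmult Pdiff P_G P_Phd) auto
  ultimately show ?thesis by simp
qed
lemma P_W3: "P W3"
proof -
  have "W3 = (\<lambda>t. \<Sum>i<p. zz t i * mv Lcom p (zz t) i)" by (rule ext) (simp add: W3_def)
  moreover have "P (\<lambda>t. \<Sum>i<p. zz t i * mv Lcom p (zz t) i)"
    by (intro Psum Pmult P_zz Pmv) auto
  ultimately show ?thesis by simp
qed

end

sublocale sys \<subseteq> gb: good n m p l pc e ec Tx Tmu Ttheta Tphi d ybar xbar q r h f g gam eta a c mubar thetabar phibar
   x mu theta phi B E Bc Ec Lcom Qm Psi dhat kappa uhat bnd
  by unfold_locales (auto simp: bnd_const bnd_add bnd_mult bnd_comp bnd_x bnd_mu bnd_theta bnd_phi)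

context sys begin

lemma nice_x: "i < n \<Longrightarrow> nice (\<lambda>t. x t i)"
proof -
  assume i: "i < n"
  have "\<forall>t\<ge>0. ((\<lambda>s. x s i) has_real_derivative XE t i / Tx i) (at t within {0..})"
    using sol_x i unfolding XE_def by blast
  then show ?thesis using bnd_x[OF i] gb.Pdivc[OF gb.P_XE] by (rule nice_deriv)
qed

lemma nice_mu: "k < m \<Longrightarrow> nice (\<lambda>t. mu t k)"
proof -
  assume k: "k < m"
  have "\<forall>t\<ge>0. ((\<lambda>s. mu s k) has_real_derivative ME t k / Tmu k) (at t within {0..})"
    using sol_mu k unfolding ME_def by blast
  then show ?thesis using bnd_mu[OF k] gb.Pdivc[OF gb.P_ME] by (rule nice_deriv)
qed

lemma nice_theta: "i < p \<Longrightarrow> nice (\<lambda>t. theta t i)"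
proof -
  assume i: "i < p"
  have "\<forall>t\<ge>0. ((\<lambda>s. theta s i) has_real_derivative TE t i / Ttheta i) (at t within {0..})"
    using sol_theta i unfolding TE_def by blast
  then show ?thesis using bnd_theta[OF i] gb.Pdivc[OF gb.P_TE[OF i]] by (rule nice_deriv)
qed

lemma nice_phi: "i < p \<Longrightarrow> nice (\<lambda>t. phi t i)"
proof -
  assume i: "i < p"
  have "\<forall>t\<ge>0. ((\<lambda>s. phi s i) has_real_derivative PE t i / Tphi i) (at t within {0..})"
    using sol_phi i unfolding PE_def by blast
  then show ?thesis using bnd_phi[OF i] gb.Pdivc[OF gb.P_PE[OF i]] by (rule nice_deriv)
qed

end

sublocale sys \<subseteq> gn: good n m p l pc e ec Tx Tmu Ttheta Tphi d ybar xbar q r h f g gam eta a c mubar thetabar phibar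
   x mu theta phi B E Bc Ec Lcom Qm Psi dhat kappa uhat nice
  by unfold_locales (auto simp: nice_const nice_add nice_mult nice_comp nice_x nice_mu nice_theta nice_phi)

lemma sq_tendsto0:
  fixes u :: "'b \<Rightarrow> real"
  assumes "((\<lambda>t. (u t)^2) \<longlongrightarrow> 0) F"
  shows "(u \<longlongrightarrow> 0) F"
proof -
  have "((\<lambda>t. sqrt ((u t)^2)) \<longlongrightarrow> sqrt 0) F" using assms by (rule tendsto_real_sqrt)
  then have "((\<lambda>t. \<bar>u t\<bar>) \<longlongrightarrow> 0) F" by simp
  then show ?thesis by (simp add: tendsto_rabs_zero_iff)
qed

lemma sandwich0:
  fixes a b :: "'b \<Rightarrow> real"
  assumes "\<And>t. 0 \<le> a t" "\<And>t. a t \<le> b t" "(b \<longlongrightarrow> 0) F"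
  shows "(a \<longlongrightarrow> 0) F"
  by (rule tendsto_sandwich[OF _ _ tendsto_const assms(3)]) (auto intro!: always_eventually assms(1,2))

lemma mv_tendsto0:
  fixes v :: "'b \<Rightarrow> nat \<Rightarrow> real"
  assumes "\<And>j. j < k \<Longrightarrow> ((\<lambda>t. v t j) \<longlongrightarrow> 0) F"
  shows "((\<lambda>t. mv A k (v t) i) \<longlongrightarrow> 0) F"
proof -
  have "((\<lambda>t. \<Sum>j<k. A i j * v t j) \<longlongrightarrow> (\<Sum>j<k. A i j * 0)) F"
    by (intro tendsto_sum tendsto_mult tendsto_const assms) auto
  then show ?thesis unfolding mv_def by simp
qed

lemma divc_tendsto0:
  fixes u :: "'b \<Rightarrow> real"
  assumes "((\<lambda>t. u t / b) \<longlongrightarrow> 0) F" "b \<noteq> 0"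
  shows "(u \<longlongrightarrow> 0) F"
proof -
  have "((\<lambda>t. b * (u t / b)) \<longlongrightarrow> b * 0) F" by (intro tendsto_mult tendsto_const assms)
  then show ?thesis using assms(2) by simp
qed

lemma diff_tendsto0_iff:
  fixes u :: "'b \<Rightarrow> real"
  shows "((\<lambda>t. u t - L) \<longlongrightarrow> 0) F \<longleftrightarrow> (u \<longlongrightarrow> L) F"
  by (simp add: tendsto_iff dist_real_def)

context sys begin

lemma ucont_of_nice: "nice u \<Longrightarrow> ucont u" by (simp add: nice_def)
lemma bnd_of_nice: "nice u \<Longrightarrow> bnd u" by (simp add: nice_def)

lemma W_tendsto: "((\<lambda>t. W1 t + W2 t + W3 t) \<longlongrightarrow> 0) at_top"
proof -
  have der: "\<forall>t\<ge>0. (V mubar has_real_derivative - (W1 t + W2 t + W3 t)) (at t within {0..})"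
    using V_deriv[OF eq1_mubar] by blast
  have uc: "ucont (\<lambda>t. - (W1 t + W2 t + W3 t))"
    using gn.P_W1 gn.P_W2 gn.P_W3 by (intro ucont_of_nice gn.Pneg gn.Padd) auto
  have s: "sv (V mubar)" using V_antimono[OF eq1_mubar] V_nonneg by (intro antimono_sv) auto
  have "((\<lambda>t. - (W1 t + W2 t + W3 t)) \<longlongrightarrow> 0) at_top" by (rule sv_deriv_tendsto0[OF der uc s])
  from tendsto_minus[OF this] show ?thesis by (simp only: minus_minus minus_zero)
qed

lemma W1_tendsto: "(W1 \<longlongrightarrow> 0) at_top"
  by (rule sandwich0[OF W1_nonneg _ W_tendsto]) (use W2_nonneg W3_nonneg in \<open>auto intro: add_increasing2\<close>)
lemma W2_tendsto: "(W2 \<longlongrightarrow> 0) at_top"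
  by (rule sandwich0[OF W2_nonneg _ W_tendsto]) (use W1_nonneg W3_nonneg in \<open>smt\<close>)
lemma W3_tendsto: "(W3 \<longlongrightarrow> 0) at_top"
  by (rule sandwich0[OF W3_nonneg _ W_tendsto]) (use W1_nonneg W2_nonneg in \<open>smt\<close>)

lemma GP_tendsto: "i < p \<Longrightarrow> ((\<lambda>t. G t i - Phd t i) \<longlongrightarrow> 0) at_top"
proof -
  assume i: "i < p"
  have "((\<lambda>t. (G t i - Phd t i)^2) \<longlongrightarrow> 0) at_top"
  proof (rule sandwich0[OF _ _ W2_tendsto])
    show "(G t i - Phd t i)^2 \<le> W2 t" for t
      unfolding W2_def using i by (intro nonneg_sum_le[where f="\<lambda>i. (G t i - Phd t i)^2"]) auto
  qed simp
  then show ?thesis by (rule sq_tendsto0)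
qed

lemma zz_tendsto: "\<forall>i<p. \<forall>j<p. ((\<lambda>t. zz t i - zz t j) \<longlongrightarrow> 0) at_top"
proof (rule conn_tendsto[OF com_graph(1) com_graph(3)])
  have "((\<lambda>t. 2 * W3 t) \<longlongrightarrow> 2 * 0) at_top" by (intro tendsto_mult tendsto_const W3_tendsto)
  then show "((\<lambda>t. \<Sum>i<p. \<Sum>j<p. a i j * (zz t i - zz t j)^2) \<longlongrightarrow> 0) at_top"
    by (simp add: W3_quad)
qed

lemma Lz_tendsto: "j < p \<Longrightarrow> ((\<lambda>t. mv Lcom p (zz t) j) \<longlongrightarrow> 0) at_top"
proof -
  assume j: "j < p"
  have "((\<lambda>t. \<Sum>k<p. a j k * (zz t j - zz t k)) \<longlongrightarrow> (\<Sum>k<p. a j k * 0)) at_top"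
    using zz_tendsto j by (intro tendsto_sum tendsto_mult tendsto_const) auto
  then show ?thesis unfolding Lcom_def using lap_row[OF j] by simp
qed

lemma PE_tendsto: "i < p \<Longrightarrow> ((\<lambda>t. PE t i) \<longlongrightarrow> 0) at_top"
proof -
  assume i: "i < p"
  have "((\<lambda>t. mv Qm p (mv Lcom p (zz t)) i) \<longlongrightarrow> 0) at_top"
    by (intro mv_tendsto0 Lz_tendsto)
  from tendsto_diff[OF GP_tendsto[OF i] this]
  show ?thesis using PE_eq[OF i] by simp
qed

lemma gam_tendsto: "k < l \<Longrightarrow> ((\<lambda>t. gam k (mv (tr Bc) n (\<lambda>j. h j (x t j)) k) - gam k (mv (tr Bc) n (\<lambda>j. h j (xbar j)) k)) \<longlongrightarrow> 0) at_top"
proof -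
  assume k: "k < l"
  let ?Z = "\<lambda>t. mv (tr Bc) n (\<lambda>j. h j (x t j)) k"
  let ?Zb = "mv (tr Bc) n (\<lambda>j. h j (xbar j)) k"
  have term_le: "(?Z t - ?Zb) * (gam k (?Z t) - gam k ?Zb) \<le> W1 t" for t
  proof -
    have a: "\<forall>k<l. 0 \<le> mv (tr Bc) n (Hx t) k *
      (gam k (mv (tr Bc) n (\<lambda>j. h j (x t j)) k) - gam k (mv (tr Bc) n (\<lambda>j. h j (xbar j)) k))"
      by (simp add: Hx_tr mono_prod_nonneg gamm)
    have b: "(\<Sum>k<pc. Hx t (c k) * (eta (c k) (h (c k) (x t (c k))) - eta (c k) (h (c k) (xbar (c k))))) \<ge> 0"
      by (intro sum_nonneg) (simp add: Hx_def mono_prod_nonneg etam)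
    have "mv (tr Bc) n (Hx t) k * (gam k (?Z t) - gam k ?Zb) \<le> (\<Sum>k<l. mv (tr Bc) n (Hx t) k *
      (gam k (mv (tr Bc) n (\<lambda>j. h j (x t j)) k) - gam k (mv (tr Bc) n (\<lambda>j. h j (xbar j)) k)))"
      by (rule nonneg_sum_le[of "{..<l}" "\<lambda>k. mv (tr Bc) n (Hx t) k *
      (gam k (mv (tr Bc) n (\<lambda>j. h j (x t j)) k) - gam k (mv (tr Bc) n (\<lambda>j. h j (xbar j)) k))" k]) (use a k in auto)
    then have "(?Z t - ?Zb) * (gam k (?Z t) - gam k ?Zb) \<le> (\<Sum>k<l. mv (tr Bc) n (Hx t) k *
      (gam k (mv (tr Bc) n (\<lambda>j. h j (x t j)) k) - gam k (mv (tr Bc) n (\<lambda>j. h j (xbar j)) k)))"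
      by (simp add: Hx_tr)
    then show ?thesis using b unfolding W1_def by linarith
  qed
  have "((\<lambda>t. (?Z t - ?Zb) * (gam k (?Z t) - gam k ?Zb)) \<longlongrightarrow> 0) at_top"
    by (rule sandwich0[OF _ term_le W1_tendsto]) (simp add: mono_prod_nonneg gamm[OF k])
  then show ?thesis by (rule mono_prod_tendsto[OF gamm[OF k] gamc[OF k] gb.P_trBc])
qed

lemma eta_tendsto: "k < pc \<Longrightarrow> ((\<lambda>t. eta (c k) (h (c k) (x t (c k))) - eta (c k) (h (c k) (xbar (c k)))) \<longlongrightarrow> 0) at_top"
proof -
  assume k: "k < pc"
  let ?Z = "\<lambda>t. h (c k) (x t (c k))"
  let ?Zb = "h (c k) (xbar (c k))"
  have term_le: "(?Z t - ?Zb) * (eta (c k) (?Z t) - eta (c k) ?Zb) \<le> W1 t" for t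
  proof -
    have a: "(\<Sum>k<l. mv (tr Bc) n (Hx t) k *
      (gam k (mv (tr Bc) n (\<lambda>j. h j (x t j)) k) - gam k (mv (tr Bc) n (\<lambda>j. h j (xbar j)) k))) \<ge> 0"
      by (intro sum_nonneg) (simp add: Hx_tr mono_prod_nonneg gamm)
    have b: "\<forall>k<pc. Hx t (c k) * (eta (c k) (h (c k) (x t (c k))) - eta (c k) (h (c k) (xbar (c k)))) \<ge> 0"
      by (simp add: Hx_def mono_prod_nonneg etam)
    have "Hx t (c k) * (eta (c k) (?Z t) - eta (c k) ?Zb) \<le>
      (\<Sum>k<pc. Hx t (c k) * (eta (c k) (h (c k) (x t (c k))) - eta (c k) (h (c k) (xbar (c k)))))"
      by (rule nonneg_sum_le[of "{..<pc}" "\<lambda>k. Hx t (c k) * (eta (c k) (h (c k) (x t (c k))) - eta (c k) (h (c k) (xbar (c k))))" k]) (use b k in auto)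
    then have "(?Z t - ?Zb) * (eta (c k) (?Z t) - eta (c k) ?Zb) \<le>
      (\<Sum>k<pc. Hx t (c k) * (eta (c k) (h (c k) (x t (c k))) - eta (c k) (h (c k) (xbar (c k)))))"
      by (simp add: Hx_def)
    then show ?thesis using a unfolding W1_def by linarith
  qed
  have "((\<lambda>t. (?Z t - ?Zb) * (eta (c k) (?Z t) - eta (c k) ?Zb)) \<longlongrightarrow> 0) at_top"
    by (rule sandwich0[OF _ term_le W1_tendsto]) (simp add: mono_prod_nonneg etam[OF k])
  then show ?thesis by (rule mono_prod_tendsto[OF etam[OF k] etac[OF k] gb.P_hx[OF c_nodes[rule_format, OF k]]])
qed

lemma D_tendsto: "i < n \<Longrightarrow> ((\<lambda>t. D t i) \<longlongrightarrow> 0) at_top"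
proof -
  assume i: "i < n"
  have a: "((\<lambda>t. mv Bc l (\<lambda>k. gam k (mv (tr Bc) n (\<lambda>j. h j (x t j)) k) - gam k (mv (tr Bc) n (\<lambda>j. h j (xbar j)) k)) i) \<longlongrightarrow> 0) at_top"
    by (intro mv_tendsto0 gam_tendsto)
  have b: "((\<lambda>t. mv Ec pc (\<lambda>k. eta (c k) (mv (tr Ec) n (\<lambda>j. h j (x t j)) k) - eta (c k) (mv (tr Ec) n (\<lambda>j. h j (xbar j)) k)) i) \<longlongrightarrow> 0) at_top"
    by (intro mv_tendsto0) (simp add: Ec_tr eta_tendsto)
  from tendsto_diff[OF tendsto_minus[OF a] b] show ?thesis using D_eq[OF i] by simp
qed

end

context sys begin

lemma phi_sv: "i < p \<Longrightarrow> sv (\<lambda>t. phi t i)"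
proof -
  assume i: "i < p"
  have der: "\<forall>t\<ge>0. ((\<lambda>s. phi s i) has_real_derivative PE t i / Tphi i) (at t within {0..})"
    using sol_phi i unfolding PE_def by blast
  have "((\<lambda>t. PE t i / Tphi i) \<longlongrightarrow> 0 / Tphi i) at_top"
    by (rule tendsto_divide[OF PE_tendsto[OF i] tendsto_const]) (use T_pos(4) i in auto)
  then show ?thesis using deriv_tendsto0_sv[OF der] by simp
qed

lemma G_sv: "i < p \<Longrightarrow> sv (\<lambda>t. G t i)"
proof -
  assume i: "i < p"
  have "sv (\<lambda>t. (G t i - Phd t i) + Phd t i)"
    by (intro sv_add tendsto_sv[OF GP_tendsto[OF i]]) (simp add: Phd_def sv_diff phi_sv[OF i] sv_const)
  then show ?thesis by simp
qed

lemma theta_sv: "i < p \<Longrightarrow> sv (\<lambda>t. theta t i)"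
proof -
  assume i: "i < p"
  have "sv (\<lambda>t. G t i + g i (thetabar i))" by (intro sv_add G_sv[OF i] sv_const)
  then have "sv (\<lambda>t. g i (theta t i))" by (simp add: G_def)
  then show ?thesis by (rule sv_inv[OF gm[OF i] gc[OF i] bnd_theta[OF i]])
qed

lemma TE_tendsto: "i < p \<Longrightarrow> ((\<lambda>t. TE t i) \<longlongrightarrow> 0) at_top"
proof -
  assume i: "i < p"
  have der: "\<forall>t\<ge>0. ((\<lambda>s. theta s i) has_real_derivative TE t i / Ttheta i) (at t within {0..})"
    using sol_theta i unfolding TE_def by blast
  have "((\<lambda>t. TE t i / Ttheta i) \<longlongrightarrow> 0) at_top"
    by (rule sv_deriv_tendsto0[OF der ucont_of_nice[OF gn.Pdivc[OF gn.P_TE[OF i]]] theta_sv[OF i]])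
  then show ?thesis by (rule divc_tendsto0) (use T_pos(3) i in auto)
qed

lemma Hx_tendsto_p: "i < p \<Longrightarrow> ((\<lambda>t. Hx t i) \<longlongrightarrow> 0) at_top"
proof -
  assume i: "i < p"
  from tendsto_diff[OF tendsto_minus[OF TE_tendsto[OF i]] GP_tendsto[OF i]]
  show ?thesis by (simp add: TE_eq[OF i])
qed

lemma x_tendsto_of_Hx: "i < n \<Longrightarrow> ((\<lambda>t. Hx t i) \<longlongrightarrow> 0) at_top \<Longrightarrow> ((\<lambda>t. x t i) \<longlongrightarrow> xbar i) at_top"
proof -
  assume i: "i < n" and H: "((\<lambda>t. Hx t i) \<longlongrightarrow> 0) at_top"
  have "((\<lambda>t. h i (x t i)) \<longlongrightarrow> h i (xbar i)) at_top"
    using H unfolding Hx_def diff_tendsto0_iff .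
  then show ?thesis by (rule inv_tendsto[OF hm[OF i]])
qed

lemma XE_tendsto_of_Hx: "i < n \<Longrightarrow> ((\<lambda>t. Hx t i) \<longlongrightarrow> 0) at_top \<Longrightarrow> ((\<lambda>t. XE t i) \<longlongrightarrow> 0) at_top"
proof -
  assume i: "i < n" and H: "((\<lambda>t. Hx t i) \<longlongrightarrow> 0) at_top"
  have der: "\<forall>t\<ge>0. ((\<lambda>s. x s i) has_real_derivative XE t i / Tx i) (at t within {0..})"
    using sol_x i unfolding XE_def by blast
  have "((\<lambda>t. XE t i / Tx i) \<longlongrightarrow> 0) at_top"
    by (rule sv_deriv_tendsto0[OF der ucont_of_nice[OF gn.Pdivc[OF gn.P_XE]] tendsto_sv[OF x_tendsto_of_Hx[OF i H]]])
  then show ?thesis by (rule divc_tendsto0) (use T_pos(1) i in auto)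
qed

lemma mu_sv_of_ME: "k < m \<Longrightarrow> ((\<lambda>t. ME t k) \<longlongrightarrow> 0) at_top \<Longrightarrow> sv (\<lambda>t. mu t k)"
proof -
  assume k: "k < m" and M: "((\<lambda>t. ME t k) \<longlongrightarrow> 0) at_top"
  have der: "\<forall>t\<ge>0. ((\<lambda>s. mu s k) has_real_derivative ME t k / Tmu k) (at t within {0..})"
    using sol_mu k unfolding ME_def by blast
  have "((\<lambda>t. ME t k / Tmu k) \<longlongrightarrow> 0 / Tmu k) at_top"
    by (rule tendsto_divide[OF M tendsto_const]) (use T_pos(2) k in auto)
  then show ?thesis using deriv_tendsto0_sv[OF der] by simp
qed

lemma ME_of_mu_sv: "k < m \<Longrightarrow> sv (\<lambda>t. mu t k) \<Longrightarrow> ((\<lambda>t. ME t k) \<longlongrightarrow> 0) at_top"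
proof -
  assume k: "k < m" and s: "sv (\<lambda>t. mu t k)"
  have der: "\<forall>t\<ge>0. ((\<lambda>s. mu s k) has_real_derivative ME t k / Tmu k) (at t within {0..})"
    using sol_mu k unfolding ME_def by blast
  have "((\<lambda>t. ME t k / Tmu k) \<longlongrightarrow> 0) at_top"
    by (rule sv_deriv_tendsto0[OF der ucont_of_nice[OF gn.Pdivc[OF gn.P_ME]] s])
  then show ?thesis by (rule divc_tendsto0) (use T_pos(2) k in auto)
qed

lemma ME_edge: "k < m \<Longrightarrow> ME t k = Hx t (fst (e k)) - Hx t (snd (e k))"
  using ME_eq incidence_tr[OF graph] B_def by simp

lemma edge_uniq: "k < m \<Longrightarrow> k' < m \<Longrightarrow> {fst (e k), snd (e k)} = {fst (e k'), snd (e k')} \<Longrightarrow> k = k'"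
  using graph unfolding simple_graph_def by blast

lemma edge_ends: "k < m \<Longrightarrow> fst (e k) < n \<and> snd (e k) < n \<and> fst (e k) \<noteq> snd (e k)"
  using graph unfolding simple_graph_def by blast

lemma BF_sv_of_Hx:
  assumes u: "u < n" and Hu: "((\<lambda>t. Hx t u) \<longlongrightarrow> 0) at_top"
  shows "sv (\<lambda>t. mv B m (Ff mubar t) u)"
proof -
  have e: "mv B m (Ff mubar t) u = D t u + mv E p (G t) u - XE t u" for t
    using XE_eq[OF eq1_mubar u, of t] by simp
  have a: "sv (\<lambda>t. D t u)" by (rule tendsto_sv[OF D_tendsto[OF u]])
  have b: "sv (\<lambda>t. mv E p (G t) u)"
  proof (cases "u < p")
    case True then show ?thesis using G_sv[OF True] by (simp add: E_mv)
  next
    case False then show ?thesis by (simp add: E_mv sv_const)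
  qed
  have cc: "sv (\<lambda>t. XE t u)" by (rule tendsto_sv[OF XE_tendsto_of_Hx[OF u Hu]])
  show ?thesis unfolding e using sv_diff[OF sv_add[OF a b] cc] .
qed

lemma Ff_sv_of_mu: "k < m \<Longrightarrow> sv (\<lambda>t. mu t k) \<Longrightarrow> sv (\<lambda>t. Ff mubar t k)"
proof -
  assume k: "k < m" and s: "sv (\<lambda>t. mu t k)"
  have "sv (\<lambda>t. f k (mu t k) - f k (mubar k))" by (intro sv_diff sv_comp[OF fc[OF k] bnd_mu[OF k] s] sv_const)
  then show ?thesis by (simp add: Ff_def)
qed

lemma mu_sv_of_Ff: "k < m \<Longrightarrow> sv (\<lambda>t. Ff mubar t k) \<Longrightarrow> sv (\<lambda>t. mu t k)"
proof -
  assume k: "k < m" and s: "sv (\<lambda>t. Ff mubar t k)"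
  have "sv (\<lambda>t. Ff mubar t k + f k (mubar k))" by (intro sv_add s sv_const)
  then have "sv (\<lambda>t. f k (mu t k))" by (simp add: Ff_def)
  then show ?thesis by (rule sv_inv[OF fm[OF k] fc[OF k] bnd_mu[OF k]])
qed

lemma zf_Hx: "zf_black n m e {..<p} v \<Longrightarrow> ((\<lambda>t. Hx t v) \<longlongrightarrow> 0) at_top"
proof (induction rule: zf_black.induct)
  case (init v)
  then show ?case using Hx_tendsto_p by auto
next
  case (force u v)
  obtain k0 where k0: "k0 < m" "{u, v} = {fst (e k0), snd (e k0)}" using force.hyps(2) unfolding adj_def by blast
  have uv: "u < n" "v < n" "u \<noteq> v" using edge_ends[OF k0(1)] k0(2) by (auto simp: doubleton_eq_iff)
  have Hu: "((\<lambda>t. Hx t u) \<longlongrightarrow> 0) at_top" by (rule force.IH)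
  have others: "sv (\<lambda>t. B u k * Ff mubar t k)" if k: "k < m" "k \<noteq> k0" for k
  proof (cases "u = fst (e k) \<or> u = snd (e k)")
    case False
    then have "B u k = 0" using k by (simp add: B_def incidence_def)
    then show ?thesis by (simp add: sv_const)
  next
    case True
    define w where "w = (if u = fst (e k) then snd (e k) else fst (e k))"
    have uw: "{u, w} = {fst (e k), snd (e k)}" using True by (auto simp: w_def)
    have adjw: "adj m e u w" unfolding adj_def using uw k by blast
    have "w \<noteq> v"
    proof
      assume "w = v"
      then have "{fst (e k), snd (e k)} = {fst (e k0), snd (e k0)}" using uw k0 by simp
      then show False using edge_uniq[OF k(1) k0(1)] k(2) by simp
    qed
    then have Hw: "((\<lambda>t. Hx t w) \<longlongrightarrow> 0) at_top" using force.IH(2) adjw by blast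
    have "((\<lambda>t. Hx t (fst (e k)) - Hx t (snd (e k))) \<longlongrightarrow> 0 - 0) at_top"
      using True Hu Hw by (intro tendsto_diff) (auto simp: w_def split: if_splits)
    then have "((\<lambda>t. ME t k) \<longlongrightarrow> 0) at_top" using ME_edge[OF k(1)] by simp
    then have "sv (\<lambda>t. Ff mubar t k)" by (intro Ff_sv_of_mu mu_sv_of_ME k)
    then show ?thesis by (rule sv_cmult)
  qed
  have split: "mv B m (Ff mubar t) u = B u k0 * Ff mubar t k0 + (\<Sum>k\<in>{..<m} - {k0}. B u k * Ff mubar t k)" for t
    unfolding mv_def using k0(1) by (simp add: sum.remove)
  have "sv (\<lambda>t. mv B m (Ff mubar t) u - (\<Sum>k\<in>{..<m} - {k0}. B u k * Ff mubar t k))"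
    by (intro sv_diff BF_sv_of_Hx[OF uv(1) Hu] sv_sum others) auto
  then have s0: "sv (\<lambda>t. B u k0 * Ff mubar t k0)" unfolding split by simp
  have Bne: "B u k0 = 1 \<or> B u k0 = -1"
    using k0 uv by (auto simp: B_def incidence_def doubleton_eq_iff)
  have "sv (\<lambda>t. B u k0 * (B u k0 * Ff mubar t k0))" by (rule sv_cmult[OF s0])
  moreover have "B u k0 * (B u k0 * Ff mubar t k0) = Ff mubar t k0" for t using Bne by auto
  ultimately have "sv (\<lambda>t. Ff mubar t k0)" by simp
  then have "((\<lambda>t. ME t k0) \<longlongrightarrow> 0) at_top" by (intro ME_of_mu_sv k0(1) mu_sv_of_Ff)
  then have M: "((\<lambda>t. Hx t (fst (e k0)) - Hx t (snd (e k0))) \<longlongrightarrow> 0) at_top" using ME_edge[OF k0(1)] by simp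
  show ?case
  proof (cases "u = fst (e k0)")
    case True
    then have "v = snd (e k0)" using k0(2) uv(3) by (auto simp: doubleton_eq_iff)
    then have "((\<lambda>t. Hx t u - (Hx t u - Hx t v)) \<longlongrightarrow> 0 - 0) at_top"
      using True M Hu by (intro tendsto_diff) auto
    then show ?thesis by simp
  next
    case False
    then have "u = snd (e k0)" "v = fst (e k0)" using k0(2) by (auto simp: doubleton_eq_iff)
    then have "((\<lambda>t. (Hx t v - Hx t u) + Hx t u) \<longlongrightarrow> 0 + 0) at_top"
      using M Hu by (intro tendsto_add) auto
    then show ?thesis by simp
  qed
qed

lemma Hx_tendsto: "i < n \<Longrightarrow> ((\<lambda>t. Hx t i) \<longlongrightarrow> 0) at_top"
  using zf_Hx Ve_zf unfolding zero_forcing_set_def by blast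

lemma x_tendsto: "i < n \<Longrightarrow> ((\<lambda>t. x t i) \<longlongrightarrow> xbar i) at_top"
  using x_tendsto_of_Hx Hx_tendsto by blast

lemma XE_tendsto: "i < n \<Longrightarrow> ((\<lambda>t. XE t i) \<longlongrightarrow> 0) at_top"
  using XE_tendsto_of_Hx Hx_tendsto by blast

end

lemma cont_tendsto_comp:
  fixes u :: "'b \<Rightarrow> real"
  assumes "continuous_on UNIV \<phi>" "(u \<longlongrightarrow> a) F"
  shows "((\<lambda>t. \<phi> (u t)) \<longlongrightarrow> \<phi> a) F"
  using assms by (intro isCont_tendsto_compose[of a \<phi>]) (auto simp: continuous_on_eq_continuous_at)

lemma mv_tendsto:
  fixes v :: "'b \<Rightarrow> nat \<Rightarrow> real"
  assumes "\<And>j. j < k \<Longrightarrow> ((\<lambda>t. v t j) \<longlongrightarrow> w j) F"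
  shows "((\<lambda>t. mv A k (v t) i) \<longlongrightarrow> mv A k w i) F"
  unfolding mv_def by (intro tendsto_sum tendsto_mult tendsto_const assms) auto

context sys begin

lemma sum_XE: "(\<Sum>i<n. XE t i) = (\<Sum>i<n. D t i) + (\<Sum>i<p. G t i)"
proof -
  have "(\<Sum>i<n. XE t i) = (\<Sum>i<n. D t i - mv B m (Ff mubar t) i + mv E p (G t) i)"
    by (intro sum.cong refl) (simp add: XE_eq[OF eq1_mubar])
  also have "\<dots> = (\<Sum>i<n. D t i) - (\<Sum>i<n. mv B m (Ff mubar t) i) + (\<Sum>i<n. mv E p (G t) i)"
    by (simp add: sum.distrib sum_subtractf)
  also have "(\<Sum>i<n. mv B m (Ff mubar t) i) = 0" unfolding B_def by (rule incidence_sum_mv[OF graph])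
  also have "(\<Sum>i<n. mv E p (G t) i) = (\<Sum>i<p. G t i)"
    unfolding E_mv using sum_if_lt[OF p_le] by simp
  finally show ?thesis by simp
qed

lemma sumG_tendsto: "((\<lambda>t. \<Sum>i<p. G t i) \<longlongrightarrow> 0) at_top"
proof -
  have "((\<lambda>t. (\<Sum>i<n. XE t i) - (\<Sum>i<n. D t i)) \<longlongrightarrow> (\<Sum>i<n. 0) - (\<Sum>i<n. 0)) at_top"
    by (intro tendsto_diff tendsto_sum XE_tendsto D_tendsto) auto
  then show ?thesis by (simp add: sum_XE)
qed

lemma zz_eq: "i < p \<Longrightarrow> zz t i = q i * Phd t i"
  unfolding zz_def by (simp add: Q_mv)

lemma Phd_tendsto: "i < p \<Longrightarrow> ((\<lambda>t. Phd t i) \<longlongrightarrow> 0) at_top"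
proof -
  have p0: "0 < p" using p_pos by simp
  define cc where "cc t = zz t 0" for t
  define S where "S = (\<Sum>i<p. 1 / q i)"
  have S: "S > 0" unfolding S_def using q_pos p0 by (intro sum_pos) auto
  have pc: "((\<lambda>t. Phd t i - cc t / q i) \<longlongrightarrow> 0) at_top" if i: "i < p" for i
  proof -
    have "((\<lambda>t. (zz t i - zz t 0) / q i) \<longlongrightarrow> 0 / q i) at_top"
      using zz_tendsto i p0 q_pos by (intro tendsto_divide tendsto_const) auto
    moreover have "(zz t i - zz t 0) / q i = Phd t i - cc t / q i" for t
    proof -
      have "q i > 0" using q_pos i by blast
      then show ?thesis using zz_eq[OF i, of t] by (simp add: cc_def field_simps)
    qed
    ultimately show ?thesis by simp
  qed
  have "((\<lambda>t. (\<Sum>i<p. G t i) - (\<Sum>i<p. (G t i - Phd t i) + (Phd t i - cc t / q i))) \<longlongrightarrow> 0 - (\<Sum>i<p. 0 + 0)) at_top"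
    by (intro tendsto_diff sumG_tendsto tendsto_sum tendsto_add GP_tendsto pc) auto
  moreover have "(\<Sum>i<p. G t i) - (\<Sum>i<p. (G t i - Phd t i) + (Phd t i - cc t / q i)) = cc t * S" for t
    unfolding S_def by (simp add: sum_subtractf[symmetric] sum_distrib_left divide_inverse)
  ultimately have "((\<lambda>t. cc t * S) \<longlongrightarrow> 0) at_top" by simp
  then have "((\<lambda>t. (cc t * S) * (1/S)) \<longlongrightarrow> 0 * (1/S)) at_top" by (intro tendsto_mult tendsto_const)
  then have ccl: "(cc \<longlongrightarrow> 0) at_top" using S by simp
  assume i: "i < p"
  have "((\<lambda>t. (Phd t i - cc t / q i) + cc t / q i) \<longlongrightarrow> 0 + 0 / q i) at_top"
    by (intro tendsto_add pc[OF i] tendsto_divide ccl tendsto_const) (use q_pos i in auto)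
  then show ?thesis by simp
qed

lemma G_tendsto: "i < p \<Longrightarrow> ((\<lambda>t. G t i) \<longlongrightarrow> 0) at_top"
proof -
  assume i: "i < p"
  from tendsto_add[OF GP_tendsto[OF i] Phd_tendsto[OF i]] show ?thesis by simp
qed

lemma theta_tendsto: "i < p \<Longrightarrow> ((\<lambda>t. theta t i) \<longlongrightarrow> thetabar i) at_top"
proof -
  assume i: "i < p"
  have "((\<lambda>t. g i (theta t i)) \<longlongrightarrow> g i (thetabar i)) at_top"
    using G_tendsto[OF i] unfolding G_def diff_tendsto0_iff .
  then show ?thesis by (rule inv_tendsto[OF gm[OF i]])
qed

lemma phi_tendsto: "i < p \<Longrightarrow> ((\<lambda>t. phi t i) \<longlongrightarrow> phibar i) at_top"
  using Phd_tendsto unfolding Phd_def diff_tendsto0_iff .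

lemma BF_tendsto: "i < n \<Longrightarrow> ((\<lambda>t. mv B m (Ff mubar t) i) \<longlongrightarrow> 0) at_top"
proof -
  assume i: "i < n"
  have e: "mv B m (Ff mubar t) i = D t i + mv E p (G t) i - XE t i" for t
    using XE_eq[OF eq1_mubar i, of t] by simp
  have b: "((\<lambda>t. mv E p (G t) i) \<longlongrightarrow> 0) at_top"
  proof (cases "i < p")
    case True then show ?thesis using G_tendsto[OF True] by (simp add: E_mv)
  next
    case False then show ?thesis by (simp add: E_mv)
  qed
  from tendsto_diff[OF tendsto_add[OF D_tendsto[OF i] b] XE_tendsto[OF i]] show ?thesis unfolding e by simp
qed

lemma mu_bound: "\<exists>M. \<forall>k<m. \<forall>t\<ge>0. \<bar>mu t k\<bar> \<le> M"
proof -
  have "\<forall>k<m. \<exists>M. \<forall>t\<ge>0. \<bar>mu t k\<bar> \<le> M" using bnd_mu unfolding bnd_def by blast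
  then obtain Mf where Mf: "\<forall>k<m. \<forall>t\<ge>0. \<bar>mu t k\<bar> \<le> Mf k" by metis
  have "\<forall>k<m. \<forall>t\<ge>0. \<bar>mu t k\<bar> \<le> (\<Sum>k<m. \<bar>Mf k\<bar>)"
  proof (intro allI impI)
    fix k t assume k: "k < m" and t: "(t::real) \<ge> 0"
    have "\<bar>Mf k\<bar> \<le> (\<Sum>k<m. \<bar>Mf k\<bar>)" using k by (intro nonneg_sum_le) auto
    then show "\<bar>mu t k\<bar> \<le> (\<Sum>k<m. \<bar>Mf k\<bar>)" using Mf k t by force
  qed
  then show ?thesis by blast
qed

lemma mu_converges: "\<exists>L. (\<forall>k<m. ((\<lambda>t. mu t k) \<longlongrightarrow> L k) at_top) \<and>
    (\<forall>i<n. mv B m (\<lambda>k. f k (L k) - f k (mubar k)) i = 0)"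
proof -
  obtain M where M: "\<forall>k<m. \<forall>t\<ge>0. \<bar>mu t k\<bar> \<le> M" using mu_bound by blast
  have "\<forall>k<m. \<forall>j. \<bar>mu (real j) k\<bar> \<le> M" using M by auto
  then obtain r L where r: "strict_mono r" and L: "\<forall>k<m. (\<lambda>j. mu (real (r j)) k) \<longlonglongrightarrow> L k"
    using bw_multi[of m "\<lambda>j k. mu (real j) k" M] by blast
  define ts where "ts j = real (r j)" for j
  have ts: "filterlim ts at_top sequentially"
    unfolding ts_def by (rule filterlim_compose[OF filterlim_real_sequentially filterlim_subseq[OF r]])
  have Lts: "\<forall>k<m. (\<lambda>j. mu (ts j) k) \<longlonglongrightarrow> L k" using L by (simp add: ts_def)
  have BL: "mv B m (\<lambda>k. f k (L k) - f k (mubar k)) i = 0" if i: "i < n" for i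
  proof -
    have "(\<lambda>j. mv B m (Ff mubar (ts j)) i) \<longlonglongrightarrow> 0"
      by (rule filterlim_compose[OF BF_tendsto[OF i] ts])
    moreover have "(\<lambda>j. mv B m (Ff mubar (ts j)) i) \<longlonglongrightarrow> mv B m (\<lambda>k. f k (L k) - f k (mubar k)) i"
      unfolding Ff_def using Lts by (intro mv_tendsto tendsto_diff cont_tendsto_comp[OF fc] tendsto_const) auto
    ultimately show ?thesis using LIMSEQ_unique by blast
  qed
  have eqL: "\<forall>i<n. Psi xbar i - mv B m (\<lambda>k. f k (L k)) i + mv E p (\<lambda>k. g k (thetabar k)) i - d i = 0"
  proof (intro allI impI)
    fix i assume i: "i < n"
    have "mv B m (\<lambda>k. f k (L k)) i - mv B m (\<lambda>k. f k (mubar k)) i = 0" unfolding mv_diff using BL[OF i] .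
    then show "Psi xbar i - mv B m (\<lambda>k. f k (L k)) i + mv E p (\<lambda>k. g k (thetabar k)) i - d i = 0"
      using eq1_mubar i by auto
  qed
  have primc: "continuous_on UNIV (prim \<phi> b)" if "continuous_on UNIV \<phi>" for \<phi> b
    using prim_deriv[OF that] by (intro continuous_at_imp_continuous_on ballI DERIV_isCont) blast
  have Vts: "(\<lambda>j. V L (ts j)) \<longlonglongrightarrow> 0"
  proof -
    have x1: "(\<lambda>j. Tx i * prim (h i) (xbar i) (x (ts j) i)) \<longlonglongrightarrow> Tx i * prim (h i) (xbar i) (xbar i)" if "i < n" for i
      using that by (intro tendsto_mult tendsto_const cont_tendsto_comp[OF primc[OF hc]]
          filterlim_compose[OF x_tendsto ts])
    have x2: "(\<lambda>j. Tmu k * prim (f k) (L k) (mu (ts j) k)) \<longlonglongrightarrow> Tmu k * prim (f k) (L k) (L k)" if "k < m" for k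
      using that Lts by (intro tendsto_mult tendsto_const cont_tendsto_comp[OF primc[OF fc]]) auto
    have x3: "(\<lambda>j. Ttheta i * prim (g i) (thetabar i) (theta (ts j) i)) \<longlonglongrightarrow> Ttheta i * prim (g i) (thetabar i) (thetabar i)" if "i < p" for i
      using that by (intro tendsto_mult tendsto_const cont_tendsto_comp[OF primc[OF gc]]
          filterlim_compose[OF theta_tendsto ts])
    have x4: "(\<lambda>j. Tphi i * (phi (ts j) i - phibar i)^2 / 2) \<longlonglongrightarrow> Tphi i * (phibar i - phibar i)^2 / 2" if "i < p" for i
      using that by (intro tendsto_mult tendsto_const tendsto_divide tendsto_power tendsto_diff
          filterlim_compose[OF phi_tendsto ts]) auto
    have "(\<lambda>j. V L (ts j)) \<longlonglongrightarrow>
       (\<Sum>i<n. Tx i * prim (h i) (xbar i) (xbar i)) + (\<Sum>k<m. Tmu k * prim (f k) (L k) (L k))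
        + (\<Sum>i<p. Ttheta i * prim (g i) (thetabar i) (thetabar i)) + (\<Sum>i<p. Tphi i * (phibar i - phibar i)^2 / 2)"
      unfolding V_def by (intro tendsto_add tendsto_sum x1 x2 x3 x4) auto
    moreover have "(\<Sum>i<n. Tx i * prim (h i) (xbar i) (xbar i)) + (\<Sum>k<m. Tmu k * prim (f k) (L k) (L k))
        + (\<Sum>i<p. Ttheta i * prim (g i) (thetabar i) (thetabar i)) + (\<Sum>i<p. Tphi i * (phibar i - phibar i)^2 / 2) = 0"
      by (simp add: prim_zero hc fc gc)
    ultimately show ?thesis by simp
  qed
  have Vt: "(V L \<longlongrightarrow> 0) at_top"
    unfolding tendsto_iff
  proof (intro allI impI)
    fix \<epsilon> :: real assume e: "\<epsilon> > 0"
    obtain N where N: "\<forall>j\<ge>N. \<bar>V L (ts j) - 0\<bar> < \<epsilon>"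
      using Vts e unfolding tendsto_iff eventually_sequentially dist_real_def by blast
    then have J: "V L (ts N) < \<epsilon>" by auto
    show "eventually (\<lambda>t. dist (V L t) 0 < \<epsilon>) at_top"
      unfolding eventually_at_top_linorder
    proof (intro exI[of _ "ts N"] allI impI)
      fix t assume t: "ts N \<le> t"
      have "ts N \<ge> 0" by (simp add: ts_def)
      then have "V L t \<le> V L (ts N)" using V_antimono[OF eqL] t by blast
      then show "dist (V L t) 0 < \<epsilon>" using J V_nonneg[of L t] by (simp add: dist_real_def)
    qed
  qed
  have "((\<lambda>t. mu t k) \<longlongrightarrow> L k) at_top" if k: "k < m" for k
  proof -
    have T0: "((\<lambda>t. Tmu k * prim (f k) (L k) (mu t k)) \<longlongrightarrow> 0) at_top"
      by (rule sandwich0[OF _ _ Vt]) (use V_terms_nonneg(2) V_term_le(2) k in auto)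
    have "((\<lambda>t. (1 / Tmu k) * (Tmu k * prim (f k) (L k) (mu t k))) \<longlongrightarrow> (1 / Tmu k) * 0) at_top"
      by (intro tendsto_mult tendsto_const T0)
    then have "((\<lambda>t. prim (f k) (L k) (mu t k)) \<longlongrightarrow> 0) at_top"
      using T_pos(2)[rule_format, OF k, THEN less_imp_neq, THEN not_sym] by simp
    then show ?thesis by (rule prim_tendsto[OF fc[OF k] fm[OF k]])
  qed
  then show ?thesis using BL by blast
qed

end

context sys begin

definition "wq j = mv Qm p phibar j + r j"

lemma Lw: "j < p \<Longrightarrow> mv Lcom p wq j = 0"
proof -
  assume j: "j < p"
  have e4: "g j (thetabar j) - phibar j - mv Qm p (mv Lcom p (\<lambda>j. mv Qm p phibar j + r j)) j = 0"
    using equilibrium(4) j by blast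
  have wq: "wq = (\<lambda>j. mv Qm p phibar j + r j)" by (rule ext) (simp add: wq_def)
  have "mv Qm p (mv Lcom p wq) j = 0" using e4 phibar_eq[OF j] unfolding wq by simp
  then have "q j * mv Lcom p wq j = 0" using j by (simp add: Q_mv)
  moreover have "q j \<noteq> 0" using q_pos j by (metis less_irrefl)
  ultimately show ?thesis by simp
qed

lemma wq_const: "i < p \<Longrightarrow> j < p \<Longrightarrow> wq i = wq j"
proof -
  assume ij: "i < p" "j < p"
  have "(\<Sum>j<p. wq j * mv (laplacian p a) p wq j) = 0"
    using Lw unfolding Lcom_def by simp
  then have quad0: "(\<Sum>i<p. \<Sum>j<p. a i j * (wq i - wq j)^2) = 0"
    using lap_quad[OF com_graph(2), of wq] by simp
  have "\<forall>i<p. \<forall>j<p. ((\<lambda>t::nat. wq i - wq j) \<longlongrightarrow> 0) sequentially"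
    by (rule conn_tendsto[OF com_graph(1) com_graph(3), where z="\<lambda>t. wq"]) (simp add: quad0)
  then have "((\<lambda>t::nat. wq i - wq j) \<longlongrightarrow> 0) sequentially" using ij by blast
  then show ?thesis by (simp add: LIMSEQ_const_iff)
qed

lemma gw: "j < p \<Longrightarrow> g j (thetabar j) = (wq 0 - r j) / q j"
proof -
  assume j: "j < p"
  have "wq j = q j * phibar j + r j" using j by (simp add: wq_def Q_mv)
  moreover have "wq j = wq 0" using wq_const[OF j] p_pos by simp
  moreover have "q j > 0" using q_pos j by blast
  ultimately show ?thesis using phibar_eq[OF j] by (simp add: field_simps)
qed

lemma Esum: "(\<Sum>i<n. mv E p v i) = (\<Sum>i<p. v i)"
  unfolding E_mv using sum_if_lt[OF p_le] by simp

lemma sumPsi: "(\<Sum>i<n. Psi xbar i) = - (\<Sum>k<pc. eta (c k) (mv (tr Ec) n (\<lambda>j. h j (xbar j)) k))"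
proof -
  define Eta where "Eta k = eta (c k) (mv (tr Ec) n (\<lambda>j. h j (xbar j)) k)" for k
  define Gam where "Gam k = gam k (mv (tr Bc) n (\<lambda>j. h j (xbar j)) k)" for k
  have "Psi xbar i = - mv Bc l Gam i - mv Ec pc Eta i" for i
    unfolding Psi_def Gam_def Eta_def by simp
  then have "(\<Sum>i<n. Psi xbar i) = (\<Sum>i<n. - mv Bc l Gam i - mv Ec pc Eta i)" by simp
  also have "\<dots> = - (\<Sum>i<n. mv Bc l Gam i) - (\<Sum>i<n. mv Ec pc Eta i)"
    by (simp add: sum_subtractf sum_negf)
  also have "(\<Sum>i<n. mv Bc l Gam i) = 0" unfolding Bc_def by (rule incidence_sum_mv[OF Bc_graph])
  also have "(\<Sum>i<n. mv Ec pc Eta i) = (\<Sum>k<pc. Eta k)" by (rule Ec_sum)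
  finally show ?thesis unfolding Eta_def by simp
qed

lemma sumg: "(\<Sum>i<p. g i (thetabar i)) = (\<Sum>i<n. d i) + (\<Sum>k<pc. eta (c k) (mv (tr Ec) n (\<lambda>j. h j (xbar j)) k))"
proof -
  have "(\<Sum>i<n. Psi xbar i - mv B m (\<lambda>k. f k (mubar k)) i + mv E p (\<lambda>k. g k (thetabar k)) i - d i) = 0"
    using eq1_mubar by simp
  moreover have "(\<Sum>i<n. Psi xbar i - mv B m (\<lambda>k. f k (mubar k)) i + mv E p (\<lambda>k. g k (thetabar k)) i - d i)
     = (\<Sum>i<n. Psi xbar i) - (\<Sum>i<n. mv B m (\<lambda>k. f k (mubar k)) i) + (\<Sum>i<n. mv E p (\<lambda>k. g k (thetabar k)) i) - (\<Sum>i<n. d i)"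
    by (simp only: sum.distrib sum_subtractf)
  moreover have "(\<Sum>i<n. mv B m (\<lambda>k. f k (mubar k)) i) = 0" unfolding B_def by (rule incidence_sum_mv[OF graph])
  ultimately show ?thesis using sumPsi Esum[of "\<lambda>k. g k (thetabar k)"] by simp
qed

lemma sumdhat: "(\<Sum>k<n. dhat k) = (\<Sum>i<n. d i) + (\<Sum>k<pc. eta (c k) (mv (tr Ec) n (\<lambda>j. h j (xbar j)) k))"
  unfolding dhat_def by (simp only: sum.distrib Ec_sum)

lemma g_uhat: "i < p \<Longrightarrow> g i (thetabar i) = uhat i"
proof -
  assume i: "i < p"
  define S where "S = (\<Sum>i<p. 1 / q i)"
  have S: "S > 0" unfolding S_def using q_pos p_pos by (intro sum_pos) (auto simp: lessThan_empty_iff)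
  have sumg2: "(\<Sum>i<p. g i (thetabar i)) = wq 0 * S - (\<Sum>i<p. r i / q i)"
  proof -
    have "(\<Sum>i<p. g i (thetabar i)) = (\<Sum>i<p. wq 0 * (1 / q i) - r i / q i)"
      by (intro sum.cong refl) (simp add: gw diff_divide_distrib)
    then show ?thesis unfolding S_def by (simp add: sum_subtractf sum_distrib_left)
  qed
  have num: "(\<Sum>k<n. dhat k + mv E p (\<lambda>i. r i / q i) k) = wq 0 * S"
    using sumdhat sumg sumg2 Esum[of "\<lambda>i. r i / q i"] by (simp add: sum.distrib)
  have "kappa i = wq 0" unfolding kappa_def trE_mv using i num S by (simp add: S_def)
  then show ?thesis using gw[OF i] by (simp add: uhat_def)
qed

lemma sys_main:
  "\<exists>xs mus thetas phis.
           (\<forall>i<n. ((\<lambda>t. x t i) \<longlongrightarrow> xs i) at_top) \<and>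
           (\<forall>k<m. ((\<lambda>t. mu t k) \<longlongrightarrow> mus k) at_top) \<and>
           (\<forall>i<p. ((\<lambda>t. theta t i) \<longlongrightarrow> thetas i) at_top) \<and>
           (\<forall>i<p. ((\<lambda>t. phi t i) \<longlongrightarrow> phis i) at_top) \<and>
           (\<forall>i<n. mv B m (\<lambda>k. f k (mus k) - f k (mubar k)) i = 0) \<and>
           (\<forall>i<n. xs i = xbar i) \<and> (\<forall>i<p. thetas i = thetabar i) \<and> (\<forall>i<p. phis i = phibar i) \<and>
           (\<forall>k<m. ((\<lambda>t. f k (mu t k)) \<longlongrightarrow> f k (mus k)) at_top) \<and>
           (\<forall>i<n. h i (xs i) = ybar i) \<and>
           (\<forall>i<p. g i (thetas i) = uhat i)"
proof -
  obtain L where L: "\<forall>k<m. ((\<lambda>t. mu t k) \<longlongrightarrow> L k) at_top"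
    "\<forall>i<n. mv B m (\<lambda>k. f k (L k) - f k (mubar k)) i = 0"
    using mu_converges by blast
  have fl: "\<forall>k<m. ((\<lambda>t. f k (mu t k)) \<longlongrightarrow> f k (L k)) at_top"
    using L(1) by (auto intro: cont_tendsto_comp[OF fc])
  show ?thesis
    apply (rule exI[of _ xbar], rule exI[of _ L], rule exI[of _ thetabar], rule exI[of _ phibar])
    using x_tendsto L theta_tendsto phi_tendsto fl xbar_def g_uhat by blast
qed

end

theorem corollary1:
  fixes n m p l pc :: nat
    and e ec :: "nat \<Rightarrow> nat \<times> nat"
    and Tx Tmu Ttheta Tphi :: "nat \<Rightarrow> real"
    and d ybar xbar q r :: "nat \<Rightarrow> real"
    and h f g gam eta :: "nat \<Rightarrow> real \<Rightarrow> real"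
    and a :: "nat \<Rightarrow> nat \<Rightarrow> real"
    and c :: "nat \<Rightarrow> nat"
    and lamm lamp um up :: "nat \<Rightarrow> ereal"
    and mubar thetabar phibar :: "nat \<Rightarrow> real"
    and x mu theta phi :: "real \<Rightarrow> nat \<Rightarrow> real"
    and B E Bc Ec Lcom Qm :: "nat \<Rightarrow> nat \<Rightarrow> real"
    and Psi :: "(nat \<Rightarrow> real) \<Rightarrow> nat \<Rightarrow> real"
    and dhat kappa uhat :: "nat \<Rightarrow> real"
  defines "B \<equiv> incidence m e"
    and "E \<equiv> (\<lambda>i j. if i = j \<and> j < p then 1 else 0)"
    and "Bc \<equiv> incidence l ec"
    and "Ec \<equiv> (\<lambda>i k. if k < pc \<and> i = c k then 1 else 0)"
    and "Lcom \<equiv> laplacian p a"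
    and "Qm \<equiv> (\<lambda>i j. if i = j then q i else 0)"
    and "Psi \<equiv> (\<lambda>xv. \<lambda>i.
            - mv Bc l (\<lambda>k. gam k (mv (tr Bc) n (\<lambda>j. h j (xv j)) k)) i
            - mv Ec pc (\<lambda>k. eta (c k) (mv (tr Ec) n (\<lambda>j. h j (xv j)) k)) i)"
    and "dhat \<equiv> (\<lambda>i. d i + mv Ec pc (\<lambda>k. eta (c k) (mv (tr Ec) n (\<lambda>j. h j (xbar j)) k)) i)"
    and "kappa \<equiv> mv (tr E) n (\<lambda>j. (\<Sum>k<n. dhat k + mv E p (\<lambda>i. r i / q i) k)
                                    / (\<Sum>i<p. 1 / q i))"
    and "uhat \<equiv> (\<lambda>i. (kappa i - r i) / q i)"
  assumes graph: "simple_graph n m e" "graph_connected n m e"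
    and p_pos: "1 \<le> p" and p_le: "p \<le> n"
    and Ve_zf: "zero_forcing_set n m e {..<p}"
    and T_pos: "\<forall>i<n. Tx i > 0" "\<forall>k<m. Tmu k > 0" "\<forall>i<p. Ttheta i > 0" "\<forall>i<p. Tphi i > 0"
    and h_prop: "\<forall>i<n. C1 (h i) \<and> strict_mono (h i)"
    and ybar_range: "\<forall>i<n. ybar i \<in> range (h i)"
    and xbar_def: "\<forall>i<n. h i (xbar i) = ybar i"
    and q_pos: "\<forall>i<p. q i > 0"
    and com_graph: "weighted_digraph p a" "balanced p a" "strongly_connected p a"
    and Bc_graph: "simple_graph n l ec"
    and c_nodes: "inj_on c {..<pc}" "\<forall>k<pc. c k < n"
    and gam_prop: "\<forall>k<l. C1 (gam k) \<and> mono (gam k)"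
    and eta_prop: "\<forall>j<pc. C1 (eta (c j)) \<and> mono (eta (c j))"
    and f_prop: "\<forall>k<m. C1 (f k) \<and> strict_mono (f k) \<and> lamm k < lamp k \<and>
                    range (f k) = {v. lamm k < ereal v \<and> ereal v < lamp k}"
    and g_prop: "\<forall>i<p. C1 (g i) \<and> strict_mono (g i) \<and> um i < up i \<and>
                    range (g i) = {v. um i < ereal v \<and> ereal v < up i}"
    and omega_ex: "\<exists>\<omega>. \<forall>k<m.
           mv (pinv n m B) n (\<lambda>i. Psi xbar i + mv E p uhat i - d i) k
           + (\<omega> k - mv (mm (pinv n m B) n B) m \<omega> k) \<in> range (f k)"
    and uhat_range: "\<forall>i<p. uhat i \<in> range (g i)"
    and Vs_zf: "zero_forcing_set n m e
                  ({..<p} \<union> {c j |j. j < pc \<and> deriv (eta (c j)) (h (c j) (xbar (c j))) > 0})"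
    and equilibrium:
      "\<forall>i<n. Psi xbar i - mv B m (\<lambda>k. f k (mubar k)) i + mv E p (\<lambda>k. g k (thetabar k)) i - d i = 0"
      "\<forall>k<m. mv (tr B) n (\<lambda>i. h i (xbar i) - ybar i) k = 0"
      "\<forall>i<p. - mv (tr E) n (\<lambda>j. h j (xbar j) - ybar j) i - (g i (thetabar i) - phibar i) = 0"
      "\<forall>i<p. g i (thetabar i) - phibar i
               - mv Qm p (mv Lcom p (\<lambda>j. mv Qm p phibar j + r j)) i = 0"
    and sol_x: "\<forall>t\<ge>0. \<forall>i<n. ((\<lambda>s. x s i) has_real_derivative
        ((Psi (x t) i - mv B m (\<lambda>k. f k (mu t k)) i + mv E p (\<lambda>k. g k (theta t k)) i - d i)
          / Tx i)) (at t within {0..})"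
    and sol_mu: "\<forall>t\<ge>0. \<forall>k<m. ((\<lambda>s. mu s k) has_real_derivative
        (mv (tr B) n (\<lambda>i. h i (x t i) - ybar i) k / Tmu k)) (at t within {0..})"
    and sol_theta: "\<forall>t\<ge>0. \<forall>i<p. ((\<lambda>s. theta s i) has_real_derivative
        ((- mv (tr E) n (\<lambda>j. h j (x t j) - ybar j) i - (g i (theta t i) - phi t i))
          / Ttheta i)) (at t within {0..})"
    and sol_phi: "\<forall>t\<ge>0. \<forall>i<p. ((\<lambda>s. phi s i) has_real_derivative
        ((g i (theta t i) - phi t i - mv Qm p (mv Lcom p (\<lambda>j. mv Qm p (phi t) j + r j)) i)
          / Tphi i)) (at t within {0..})"
  shows "\<exists>xs mus thetas phis.
           (\<forall>i<n. ((\<lambda>t. x t i) \<longlongrightarrow> xs i) at_top) \<and>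
           (\<forall>k<m. ((\<lambda>t. mu t k) \<longlongrightarrow> mus k) at_top) \<and>
           (\<forall>i<p. ((\<lambda>t. theta t i) \<longlongrightarrow> thetas i) at_top) \<and>
           (\<forall>i<p. ((\<lambda>t. phi t i) \<longlongrightarrow> phis i) at_top) \<and>
           (\<forall>i<n. mv B m (\<lambda>k. f k (mus k) - f k (mubar k)) i = 0) \<and>
           (\<forall>i<n. xs i = xbar i) \<and> (\<forall>i<p. thetas i = thetabar i) \<and> (\<forall>i<p. phis i = phibar i) \<and>
           (\<forall>k<m. ((\<lambda>t. f k (mu t k)) \<longlongrightarrow> f k (mus k)) at_top) \<and>
           (\<forall>i<n. h i (xs i) = ybar i) \<and>
           (\<forall>i<p. g i (thetas i) = uhat i)"
proof -
  have hP: "\<forall>i<n. continuous_on UNIV (h i) \<and> strict_mono (h i)" using h_prop C1_cont by blast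
  have fP: "\<forall>k<m. continuous_on UNIV (f k) \<and> strict_mono (f k)" using f_prop C1_cont by blast
  have gP: "\<forall>i<p. continuous_on UNIV (g i) \<and> strict_mono (g i)" using g_prop C1_cont by blast
  have gamP: "\<forall>k<l. continuous_on UNIV (gam k) \<and> mono (gam k)" using gam_prop C1_cont by blast
  have etaP: "\<forall>j<pc. continuous_on UNIV (eta (c j)) \<and> mono (eta (c j))" using eta_prop C1_cont by blast
  interpret S: sys n m p l pc e ec Tx Tmu Ttheta Tphi d ybar xbar q r h f g gam eta a c mubar thetabar phibar
    x mu theta phi B E Bc Ec Lcom Qm Psi dhat kappa uhat
    by unfold_locales
      (rule B_def[THEN meta_eq_to_obj_eq] E_def[THEN meta_eq_to_obj_eq] Bc_def[THEN meta_eq_to_obj_eq]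
        Ec_def[THEN meta_eq_to_obj_eq] Lcom_def[THEN meta_eq_to_obj_eq] Qm_def[THEN meta_eq_to_obj_eq]
        Psi_def[THEN meta_eq_to_obj_eq] dhat_def[THEN meta_eq_to_obj_eq] kappa_def[THEN meta_eq_to_obj_eq]
        uhat_def[THEN meta_eq_to_obj_eq] graph(1) p_pos p_le Ve_zf T_pos hP xbar_def q_pos com_graph Bc_graph
        c_nodes(2) gamP etaP fP gP equilibrium sol_x sol_mu sol_theta sol_phi)+
  show ?thesis by (rule S.sys_main)
qed

end
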